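(* Let $X$ be a separable Banach space over $\mathbb{K}\in\{\mathbb{R},\mathbb{C}\}$ and $T\colon X\to X$ a bounded linear operator. If $T$ is densely uniformly Li-Yorke chaotic, then $T$ admits a dense irregular manifold.
   Context: A subset $S\subset X$ with at least two points is uniformly Li-Yorke scrambled for $T$ if there exist sequences $\{p_n\}$, $\{q_n\}$ in $\mathbb{N}$ such that for all distinct $x,y\in S$: $\lim_n\|T^{p_n}x-T^{p_n}y\|=0$ and $\lim_n\|T^{q_n}x-T^{q_n}y\|=\infty$; $T$ is densely uniformly Li-Yorke chaotic if there is a dense, uncountable such set. A vector $x$ is irregular for $T$ if $\liminf_n\|T^nx\|=0$ and $\limsup_n\|T^nx\|=\infty$. An irregular manifold is a vector subspace $Y\subset X$ every non-zero vector of which is irregular for $T$. *)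

theory Defs
  imports "HOL-Analysis.Analysis" "HOL-Library.Liminf_Limsup"
begin

definition unif_LY_scrambled :: "('a::real_normed_vector \<Rightarrow> 'a) \<Rightarrow> 'a set \<Rightarrow> bool" where
  "unif_LY_scrambled T S \<longleftrightarrow>
     (\<exists>x\<in>S. \<exists>y\<in>S. x \<noteq> y) \<and>
     (\<exists>p q :: nat \<Rightarrow> nat.
        \<forall>x\<in>S. \<forall>y\<in>S. x \<noteq> y \<longrightarrow>
          ((\<lambda>n. norm ((T ^^ p n) x - (T ^^ p n) y)) \<longlonglongrightarrow> 0) \<and>
          filterlim (\<lambda>n. norm ((T ^^ q n) x - (T ^^ q n) y)) at_top sequentially)"

definition densely_unif_LY_chaotic :: "('a::real_normed_vector \<Rightarrow> 'a) \<Rightarrow> bool" where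
  "densely_unif_LY_chaotic T \<longleftrightarrow>
     (\<exists>S. uncountable S \<and> closure S = UNIV \<and> unif_LY_scrambled T S)"

definition irregular_vector :: "('a::real_normed_vector \<Rightarrow> 'a) \<Rightarrow> 'a \<Rightarrow> bool" where
  "irregular_vector T x \<longleftrightarrow>
     liminf (\<lambda>n. ereal (norm ((T ^^ n) x))) = 0 \<and>
     limsup (\<lambda>n. ereal (norm ((T ^^ n) x))) = \<infinity>"

definition irregular_manifold :: "('a::real_normed_vector \<Rightarrow> 'a) \<Rightarrow> 'a set \<Rightarrow> bool" where
  "irregular_manifold T Y \<longleftrightarrow> subspace Y \<and> (\<forall>y\<in>Y. y \<noteq> 0 \<longrightarrow> irregular_vector T y)"

text \<open>Complex scalars.  There is no class of complex normed spaces in the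
  distribution, so a complex structure on a real normed space is given by an
  explicit scalar multiplication \<open>sc\<close>.\<close>
definition complex_normed_structure :: "(complex \<Rightarrow> 'a::real_normed_vector \<Rightarrow> 'a) \<Rightarrow> bool" where
  "complex_normed_structure sc \<longleftrightarrow>
     module sc \<and>
     (\<forall>r x. sc (complex_of_real r) x = r *\<^sub>R x) \<and>
     (\<forall>c x. norm (sc c x) = cmod c * norm x)"

definition irregular_manifold_C ::
    "(complex \<Rightarrow> 'a::real_normed_vector \<Rightarrow> 'a) \<Rightarrow> ('a \<Rightarrow> 'a) \<Rightarrow> 'a set \<Rightarrow> bool" where
  "irregular_manifold_C sc T Y \<longleftrightarrow>
     module.subspace sc Y \<and> (\<forall>y\<in>Y. y \<noteq> 0 \<longrightarrow> irregular_vector T y)"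

end

theory Submission
  imports Defs
begin


locale LYsetup = module sm
  for sm :: "'k::{real_normed_field,heine_borel} \<Rightarrow> 'a::banach \<Rightarrow> 'a" +
  fixes T :: "'a \<Rightarrow> 'a" and p :: "nat \<Rightarrow> nat"
  assumes blT: "bounded_linear T"
    and ofr: "\<And>r x. sm (of_real r) x = r *\<^sub>R x"
    and nrm: "\<And>c x. norm (sm c x) = norm c * norm x"
    and comm: "\<And>c x. T (sm c x) = sm c (T x)"
    and Adense: "closure {x. (\<lambda>m. (T ^^ p m) x) \<longlonglongrightarrow> 0} = UNIV"
    and unbvec: "\<exists>u. \<forall>B. \<exists>n. norm ((T ^^ n) u) > B"
    and sep: "\<exists>D::'a set. countable D \<and> closure D = UNIV"
begin

lemma bl_pow: "bounded_linear (T ^^ n)"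
proof (induction n)
  case 0 then show ?case by (simp add: bounded_linear_ident id_def)
next
  case (Suc n) then show ?case
    using bounded_linear_compose[OF blT Suc] by (simp add: comp_def)
qed

lemma pow_add: "(T ^^ n) (x + y) = (T ^^ n) x + (T ^^ n) y"
  using bl_pow[of n] by (simp add: linear_simps)
lemma pow_diff: "(T ^^ n) (x - y) = (T ^^ n) x - (T ^^ n) y"
  using bl_pow[of n] by (simp add: linear_simps)
lemma pow_zero[simp]: "(T ^^ n) 0 = 0"
  using bl_pow[of n] by (simp add: linear_simps)
lemma pow_minus: "(T ^^ n) (- x) = - (T ^^ n) x"
  using bl_pow[of n] by (simp add: linear_simps)
lemma pow_scaleR: "(T ^^ n) (r *\<^sub>R x) = r *\<^sub>R (T ^^ n) x"
  using bl_pow[of n] by (simp add: linear_simps)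
lemma pow_sum: "(T ^^ n) (sum f A) = (\<Sum>a\<in>A. (T ^^ n) (f a))"
  using bl_pow[of n] by (simp add: linear_simps bounded_linear.linear linear_sum)
lemma pow_sm: "(T ^^ n) (sm c x) = sm c ((T ^^ n) x)"
  by (induction n) (simp_all add: comm)
lemma pow_cont: "continuous_on UNIV (T ^^ n)"
  using bl_pow[of n] by (simp add: linear_continuous_on)
lemma pow_bound: "\<exists>K>0. \<forall>x. norm ((T ^^ n) x) \<le> norm x * K"
  using bounded_linear.pos_bounded[OF bl_pow[of n]] by blast
lemma pow_comp: "(T ^^ m) ((T ^^ n) x) = (T ^^ (m + n)) x"
  by (simp add: funpow_add)
lemma blTb: "\<exists>K>0. \<forall>x. norm (T x) \<le> norm x * K"
  using bounded_linear.pos_bounded[OF blT] by blast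

lemma nrm_of_real: "norm (sm (of_real r) x) = \<bar>r\<bar> * norm x"
  by (simp add: ofr)

definition bdd :: "'a \<Rightarrow> bool" where
  "bdd x \<longleftrightarrow> (\<exists>K. \<forall>n. norm ((T ^^ n) x) \<le> K)"

lemma bdd_0[simp]: "bdd 0" unfolding bdd_def by auto

lemma bdd_add: "bdd x \<Longrightarrow> bdd y \<Longrightarrow> bdd (x + y)"
  unfolding bdd_def
proof (elim exE)
  fix K1 K2 assume "\<forall>n. norm ((T ^^ n) x) \<le> K1" "\<forall>n. norm ((T ^^ n) y) \<le> K2"
  then have "\<forall>n. norm ((T ^^ n) (x + y)) \<le> K1 + K2"
    by (metis add_mono norm_triangle_ineq order_trans pow_add)
  then show "\<exists>K. \<forall>n. norm ((T ^^ n) (x + y)) \<le> K" by blast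
qed

lemma bdd_sm: "bdd x \<Longrightarrow> bdd (sm c x)"
  unfolding bdd_def
proof (elim exE)
  fix K assume K: "\<forall>n. norm ((T ^^ n) x) \<le> K"
  have "norm ((T ^^ n) (sm c x)) \<le> norm c * K" for n
    using K by (simp add: pow_sm nrm mult_left_mono)
  then show "\<exists>K. \<forall>n. norm ((T ^^ n) (sm c x)) \<le> K" by blast
qed

lemma bdd_sm_iff: "c \<noteq> 0 \<Longrightarrow> bdd (sm c x) \<longleftrightarrow> bdd x"
  using bdd_sm[of "sm c x" "inverse c"] bdd_sm[of x c] by auto

lemma bdd_scaleR: "bdd x \<Longrightarrow> bdd (r *\<^sub>R x)"
  using bdd_sm[of x "of_real r"] by (simp add: ofr)

lemma bdd_minus: "bdd x \<Longrightarrow> bdd (- x)"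
  using bdd_scaleR[of x "-1"] by simp

lemma bdd_diff: "bdd x \<Longrightarrow> bdd y \<Longrightarrow> bdd (x - y)"
  using bdd_add[of x "- y"] bdd_minus[of y] by simp

lemma bdd_T: "bdd x \<Longrightarrow> bdd (T x)"
  unfolding bdd_def
proof (elim exE)
  fix K assume K: "\<forall>n. norm ((T ^^ n) x) \<le> K"
  have "norm ((T ^^ n) (T x)) \<le> K" for n
    using K[rule_format, of "Suc n"] by (simp add: funpow_swap1)
  then show "\<exists>K. \<forall>n. norm ((T ^^ n) (T x)) \<le> K" by blast
qed

lemma bdd_pow: "bdd x \<Longrightarrow> bdd ((T ^^ m) x)"
  by (induction m) (simp_all add: bdd_T)

lemma bdd_sum: "finite I \<Longrightarrow> (\<And>i. i \<in> I \<Longrightarrow> bdd (f i)) \<Longrightarrow> bdd (sum f I)"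
  by (induction I rule: finite_induct) (auto intro: bdd_add)

lemma not_bdd: "\<not> bdd x \<longleftrightarrow> (\<forall>B. \<exists>n. norm ((T ^^ n) x) > B)"
  unfolding bdd_def by (auto simp: not_le)

lemma freq_small:
  assumes sm0: "\<forall>e>0. \<exists>n. norm ((T ^^ n) y) < e"
    and ub: "\<not> bdd y" and "e > 0"
  shows "\<exists>m\<ge>n. norm ((T ^^ m) y) < e"
proof (rule ccontr)
  assume H: "\<not> (\<exists>m\<ge>n. norm ((T ^^ m) y) < e)"
  show False
  proof (cases "\<exists>k<n. (T ^^ k) y = 0")
    case True
    then obtain k where k: "k < n" "(T ^^ k) y = 0" by blast
    have "norm ((T ^^ j) y) \<le> (\<Sum>i<k. norm ((T ^^ i) y))" for j
    proof (cases "j < k")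
      case True
      then show ?thesis
        by (intro member_le_sum) auto
    next
      case False
      then obtain d where "j = d + k" by (metis add.commute le_add_diff_inverse not_less)
      then have "(T ^^ j) y = 0" using k by (simp add: funpow_add)
      then show ?thesis by (simp add: sum_nonneg)
    qed
    then show False using ub unfolding bdd_def by blast
  next
    case False
    then have pos: "\<forall>k<n. norm ((T ^^ k) y) > 0" by auto
    define mu where "mu = (if n = 0 then e else min e (Min ((\<lambda>k. norm ((T ^^ k) y)) ` {..<n})))"
    have "0 < Min ((\<lambda>k. norm ((T ^^ k) y)) ` {..<n})" if "n \<noteq> 0"
      by (subst Min_gr_iff) (use pos that in auto)
    then have mupos: "mu > 0"
      using \<open>e > 0\<close> by (auto simp: mu_def)
    obtain m where m: "norm ((T ^^ m) y) < mu" using sm0 mupos by blast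
    show False
    proof (cases "m < n")
      case True
      then have "n \<noteq> 0" by auto
      then have "mu \<le> norm ((T ^^ m) y)"
        using True by (auto simp: mu_def intro!: min.coboundedI2 Min_le)
      then show False using m by simp
    next
      case False
      then have "norm ((T ^^ m) y) \<ge> e" using H by (meson not_le not_less)
      moreover have "mu \<le> e" by (simp add: mu_def)
      ultimately show False using m by simp
    qed
  qed
qed

lemma irregularI:
  assumes sm0: "\<forall>e>0. \<exists>n. norm ((T ^^ n) y) < e"
    and ub: "\<not> bdd y"
  shows "irregular_vector T y"
proof -
  let ?f = "\<lambda>n. ereal (norm ((T ^^ n) y))"
  have inf0: "(INF m\<in>{n..}. ?f m) = 0" for n
  proof (rule antisym)
    show "0 \<le> (INF m\<in>{n..}. ?f m)" by (auto intro: INF_greatest)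
    show "(INF m\<in>{n..}. ?f m) \<le> 0"
    proof (rule ereal_le_epsilon2)
      fix e :: real assume "e > 0"
      then obtain m where "m \<ge> n" "norm ((T ^^ m) y) < e"
        using freq_small[OF sm0 ub] by blast
      then have "(INF m\<in>{n..}. ?f m) \<le> ?f m" by (auto intro: INF_lower)
      also have "\<dots> \<le> 0 + ereal e" using \<open>norm ((T ^^ m) y) < e\<close> by simp
      finally show "(INF m\<in>{n..}. ?f m) \<le> 0 + ereal e" .
    qed
  qed
  have sup: "(SUP m\<in>{n..}. ?f m) = \<infinity>" for n
  proof -
    have H: "\<exists>m\<ge>n. norm ((T ^^ m) y) > B" for B
    proof -
      define B' where "B' = max B (\<Sum>i<n. norm ((T ^^ i) y))"
      obtain m where m: "norm ((T ^^ m) y) > B'" using ub unfolding not_bdd by blast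
      have "m \<ge> n"
      proof (rule ccontr)
        assume "\<not> m \<ge> n"
        then have "norm ((T ^^ m) y) \<le> (\<Sum>i<n. norm ((T ^^ i) y))"
          by (intro member_le_sum) auto
        then show False using m by (simp add: B'_def)
      qed
      then show ?thesis using m by (auto simp: B'_def)
    qed
    show ?thesis
    proof (rule SUP_PInfty)
      fix k :: nat
      obtain m where "m \<ge> n" "norm ((T ^^ m) y) > real k" using H by blast
      then show "\<exists>m\<in>{n..}. ereal (real k) \<le> ereal (norm ((T ^^ m) y))"
        by (intro bexI[of _ m]) auto
    qed
  qed
  show ?thesis
    unfolding irregular_vector_def liminf_SUP_INF limsup_INF_SUP
    by (simp add: inf0 sup)
qed

end


context LYsetup begin

definition Aset :: "'a set" where
  "Aset = {x. (\<lambda>m. (T ^^ p m) x) \<longlonglongrightarrow> 0}"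

lemma A_dense: "e > 0 \<Longrightarrow> \<exists>a\<in>Aset. dist a x < e"
  using Adense unfolding Aset_def[symmetric]
  by (metis UNIV_I closure_approachable)

lemma A_scaleR: "x \<in> Aset \<Longrightarrow> c *\<^sub>R x \<in> Aset"
  unfolding Aset_def using tendsto_scaleR[OF tendsto_const, of _ 0 sequentially c]
  by (simp add: pow_scaleR)

lemma A_add: "x \<in> Aset \<Longrightarrow> y \<in> Aset \<Longrightarrow> x + y \<in> Aset"
  unfolding Aset_def using tendsto_add by (fastforce simp: pow_add)

lemma A_diff: "x \<in> Aset \<Longrightarrow> y \<in> Aset \<Longrightarrow> x - y \<in> Aset"
  unfolding Aset_def using tendsto_diff by (fastforce simp: pow_diff)

lemma ev_small:
  assumes "finite I" "\<forall>x\<in>I. x \<in> Aset" "e > 0"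
  shows "\<exists>m0. \<forall>m\<ge>m0. \<forall>x\<in>I. norm ((T ^^ p m) x) \<le> e"
proof -
  have "\<forall>x\<in>I. eventually (\<lambda>m. norm ((T ^^ p m) x) < e) sequentially"
  proof
    fix x assume "x \<in> I"
    then have "(\<lambda>m. (T ^^ p m) x) \<longlonglongrightarrow> 0" using assms(2) by (auto simp: Aset_def)
    then have "(\<lambda>m. norm ((T ^^ p m) x)) \<longlonglongrightarrow> 0" using tendsto_norm_zero by blast
    then show "eventually (\<lambda>m. norm ((T ^^ p m) x) < e) sequentially"
      using assms(3) by (rule order_tendstoD)
  qed
  then have "eventually (\<lambda>m. \<forall>x\<in>I. norm ((T ^^ p m) x) < e) sequentially"
    using assms(1) by (simp add: eventually_ball_finite)
  then show ?thesis unfolding eventually_sequentially by (meson less_imp_le)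
qed

definition Kb :: "nat \<Rightarrow> real" where
  "Kb n = (SOME K. K > 0 \<and> (\<forall>x. norm ((T ^^ n) x) \<le> norm x * K))"

lemma Kb: "Kb n > 0" "norm ((T ^^ n) x) \<le> norm x * Kb n"
proof -
  have "\<exists>K. K > 0 \<and> (\<forall>x. norm ((T ^^ n) x) \<le> norm x * K)" using pow_bound by blast
  from someI_ex[OF this] show "Kb n > 0" "norm ((T ^^ n) x) \<le> norm x * Kb n"
    unfolding Kb_def by auto
qed

lemma small_times:
  assumes "finite Ns" "\<eta> > 0"
  shows "\<exists>\<kappa>>0. \<forall>z::'a. norm z \<le> \<kappa> \<longrightarrow> (\<forall>n\<in>Ns. norm ((T ^^ n) z) \<le> \<eta>)"
proof -
  define K where "K = 1 + (\<Sum>n\<in>Ns. Kb n)"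
  have Kpos: "K > 0" unfolding K_def using Kb(1) by (simp add: add_pos_nonneg sum_nonneg less_imp_le)
  have KK: "Kb n \<le> K" if "n \<in> Ns" for n
  proof -
    have "Kb n \<le> (\<Sum>n\<in>Ns. Kb n)" using that assms(1) Kb(1) by (intro member_le_sum) (auto intro: less_imp_le)
    then show ?thesis unfolding K_def by simp
  qed
  show ?thesis
  proof (intro exI[of _ "\<eta> / K"] conjI allI impI ballI)
    show "\<eta> / K > 0" using Kpos assms(2) by simp
    fix z :: 'a and n assume z: "norm z \<le> \<eta> / K" and n: "n \<in> Ns"
    have "norm ((T ^^ n) z) \<le> norm z * Kb n" by (rule Kb(2))
    also have "\<dots> \<le> (\<eta> / K) * K"
      using z KK[OF n] Kb(1)[of n] Kpos assms(2) by (intro mult_mono) auto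
    also have "\<dots> = \<eta>" using Kpos by simp
    finally show "norm ((T ^^ n) z) \<le> \<eta>" .
  qed
qed

end


context LYsetup begin

lemma hump:
  assumes c2: "\<forall>C. \<exists>m x. norm ((T ^^ p m) x) > C * norm x"
  shows "\<exists>m\<ge>m1. \<exists>w\<in>Aset. norm ((T ^^ p m) w) > C * norm w"
proof -
  define C' where "C' = max C (\<Sum>m<m1. Kb (p m))"
  obtain m x where mx: "norm ((T ^^ p m) x) > C' * norm x" using c2 by blast
  have "m \<ge> m1"
  proof (rule ccontr)
    assume "\<not> m \<ge> m1"
    then have "Kb (p m) \<le> (\<Sum>m<m1. Kb (p m))"
      using Kb(1) by (intro member_le_sum) (auto intro: less_imp_le)
    then have "Kb (p m) \<le> C'" unfolding C'_def by linarith
    then have "norm ((T ^^ p m) x) \<le> C' * norm x"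
      using Kb(2)[of "p m" x] by (metis mult.commute mult_left_mono norm_ge_zero order_trans)
    then show False using mx by simp
  qed
  define U where "U = {y. C * norm y < norm ((T ^^ p m) y)}"
  have "open U" unfolding U_def
    by (intro open_Collect_less continuous_intros continuous_on_subset[OF pow_cont] ) auto
  have "x \<in> U"
  proof -
    have "C * norm x \<le> C' * norm x" unfolding C'_def by (simp add: mult_right_mono)
    then show ?thesis using mx by (simp add: U_def)
  qed
  then have "U \<inter> closure Aset \<noteq> {}" using Adense unfolding Aset_def by auto
  then have "U \<inter> Aset \<noteq> {}" using open_Int_closure_eq_empty[OF \<open>open U\<close>] by blast
  then obtain w where "w \<in> U" "w \<in> Aset" by blast
  then show ?thesis using \<open>m \<ge> m1\<close> by (auto simp: U_def)
qed

definition own :: "nat \<Rightarrow> nat" where "own i = fst (prod_decode i)"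

definition avec :: "('a \<times> 'a \<times> nat \<times> nat) list \<Rightarrow> 'a \<Rightarrow> nat \<Rightarrow> 'a" where
  "avec h a k = (if k < length h then fst (h ! k) else a)"
definition zvec :: "('a \<times> 'a \<times> nat \<times> nat) list \<Rightarrow> 'a \<Rightarrow> nat \<Rightarrow> 'a" where
  "zvec h z k = (if k < length h then fst (snd (h ! k)) else z)"

definition good2 :: "(nat \<Rightarrow> 'a) \<Rightarrow> (nat \<Rightarrow> real) \<Rightarrow> ('a \<times> 'a \<times> nat \<times> nat) list
    \<Rightarrow> ('a \<times> 'a \<times> nat \<times> nat) \<Rightarrow> bool" where
  "good2 t r h d \<longleftrightarrow> (case d of (a, z, N, M) \<Rightarrow>
     a \<in> Aset \<and> norm (a - t (length h)) < r (length h) / 2 \<and>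
     z \<in> Aset \<and> norm z \<le> r (own (length h)) / 8 * (1/2) ^ length h \<and>
     (\<forall>k\<le>length h. norm ((T ^^ N) (avec h a k)) \<le> 1) \<and>
     (\<forall>l<length h. norm ((T ^^ N) (zvec h z l)) \<le> (1/2) ^ l) \<and>
     norm ((T ^^ N) z) \<ge> real (length h) + 1 \<and>
     (\<forall>j<length h. norm ((T ^^ fst (snd (snd (h ! j)))) z) \<le> (1/2) ^ length h \<and>
          norm ((T ^^ snd (snd (snd (h ! j)))) z) \<le> (1/2) ^ length h / (real j + 1)) \<and>
     (\<forall>k\<le>length h. norm ((T ^^ M) (avec h a k)) \<le> 1 / (real (length h) + 1)) \<and>
     (\<forall>l\<le>length h. norm ((T ^^ M) (zvec h z l)) \<le> (1/2) ^ l / (real (length h) + 1)))"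

lemma ex_good2:
  assumes c2: "\<forall>C. \<exists>m x. norm ((T ^^ p m) x) > C * norm x"
    and hA: "\<forall>k<length h. fst (h ! k) \<in> Aset \<and> fst (snd (h ! k)) \<in> Aset"
    and rpos: "r (length h) > 0" "r (own (length h)) > 0"
  shows "\<exists>d. good2 t r h d"
proof -
  define i where "i = length h"
  obtain a where a: "a \<in> Aset" "dist a (t i) < r i / 2"
    using A_dense[of "r i / 2" "t i"] rpos unfolding i_def by auto
  define O1 where "O1 = avec h a ` {..i} \<union> zvec h a ` {..<i}"
  have O1A: "\<forall>x\<in>O1. x \<in> Aset"
    using hA a(1) unfolding O1_def avec_def zvec_def i_def by auto
  obtain m1 where m1: "\<forall>m\<ge>m1. \<forall>x\<in>O1. norm ((T ^^ p m) x) \<le> (1/2) ^ i"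
    using ev_small[OF _ O1A, of "(1/2)^i"] unfolding O1_def by auto
  define Ns where "Ns = (\<lambda>j. fst (snd (snd (h ! j)))) ` {..<i} \<union> (\<lambda>j. snd (snd (snd (h ! j)))) ` {..<i}"
  obtain \<kappa>0 where k0: "\<kappa>0 > 0" "\<forall>z::'a. norm z \<le> \<kappa>0 \<longrightarrow> (\<forall>n\<in>Ns. norm ((T ^^ n) z) \<le> (1/2)^i / (real i + 1))"
    using small_times[of Ns "(1/2)^i / (real i + 1)"] unfolding Ns_def by auto
  define \<kappa> where "\<kappa> = min \<kappa>0 (r (own i) / 8 * (1/2) ^ i)"
  have kpos: "\<kappa> > 0" using k0(1) rpos unfolding \<kappa>_def i_def by simp
  obtain m w where mw: "m \<ge> m1" "w \<in> Aset" "norm ((T ^^ p m) w) > ((real i + 1) / \<kappa>) * norm w"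
    using hump[OF c2, of m1 "(real i + 1) / \<kappa>"] by blast
  have wnz: "w \<noteq> 0" using mw(3) by auto
  define z where "z = (\<kappa> / norm w) *\<^sub>R w"
  have zA: "z \<in> Aset" unfolding z_def using mw(2) by (rule A_scaleR)
  have nz: "norm z = \<kappa>" unfolding z_def using wnz kpos by simp
  have hz: "norm ((T ^^ p m) z) > real i + 1"
  proof -
    have "norm ((T ^^ p m) z) = (\<kappa> / norm w) * norm ((T ^^ p m) w)"
      unfolding z_def pow_scaleR using kpos by simp
    also have "\<dots> > (\<kappa> / norm w) * (((real i + 1) / \<kappa>) * norm w)"
      using mw(3) kpos wnz by (intro mult_strict_left_mono) auto
    also have "(\<kappa> / norm w) * (((real i + 1) / \<kappa>) * norm w) = real i + 1"
      using kpos wnz by (simp add: field_simps)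
    finally show ?thesis .
  qed
  define O2 where "O2 = avec h a ` {..i} \<union> zvec h z ` {..i}"
  have O2A: "\<forall>x\<in>O2. x \<in> Aset"
    using hA a(1) zA unfolding O2_def avec_def zvec_def i_def by auto
  obtain m2 where m2: "\<forall>m\<ge>m2. \<forall>x\<in>O2. norm ((T ^^ p m) x) \<le> (1/2) ^ i / (real i + 1)"
    using ev_small[OF _ O2A, of "(1/2)^i / (real i + 1)"] unfolding O2_def by auto
  have half_mono: "(1/2::real) ^ i \<le> (1/2) ^ l" if "l \<le> i" for l
    using that by (intro power_decreasing) auto
  have half_le1: "(1/2::real) ^ i \<le> 1" by (simp add: power_le_one)
  show ?thesis
  proof (intro exI[of _ "(a, z, p m, p m2)"])
    show "good2 t r h (a, z, p m, p m2)"
      unfolding good2_def prod.case i_def[symmetric]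
    proof (intro conjI allI impI)
      show "a \<in> Aset" by (rule a(1))
      show "norm (a - t i) < r i / 2" using a(2) by (simp add: dist_norm)
      show "z \<in> Aset" by (rule zA)
      show "norm z \<le> r (own i) / 8 * (1 / 2) ^ i" using nz unfolding \<kappa>_def by simp
      fix k assume "k \<le> i"
      then have "avec h a k \<in> O1" unfolding O1_def by auto
      then have "norm ((T ^^ p m) (avec h a k)) \<le> (1/2) ^ i" using m1 mw(1) by blast
      then show "norm ((T ^^ p m) (avec h a k)) \<le> 1" using half_le1 by linarith
    next
      fix l assume "l < i"
      then have "zvec h a l = zvec h z l" "zvec h a l \<in> O1"
        unfolding O1_def zvec_def i_def by auto
      then have "norm ((T ^^ p m) (zvec h z l)) \<le> (1/2) ^ i" using m1 mw(1) by metis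
      then show "norm ((T ^^ p m) (zvec h z l)) \<le> (1/2) ^ l" using half_mono[of l] \<open>l < i\<close> by linarith
    next
      show "real i + 1 \<le> norm ((T ^^ p m) z)" using hz by simp
    next
      fix j assume "j < i"
      then have "fst (snd (snd (h ! j))) \<in> Ns" "snd (snd (snd (h ! j))) \<in> Ns" unfolding Ns_def by auto
      then have 1: "norm ((T ^^ fst (snd (snd (h ! j)))) z) \<le> (1/2)^i / (real i + 1)"
        and 2: "norm ((T ^^ snd (snd (snd (h ! j)))) z) \<le> (1/2)^i / (real i + 1)"
        using k0(2) nz unfolding \<kappa>_def by auto
      have "(1/2::real)^i / (real i + 1) \<le> (1/2)^i" by (simp add: divide_le_eq)
      then show "norm ((T ^^ fst (snd (snd (h ! j)))) z) \<le> (1/2)^i" using 1 by linarith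
      have "(1/2::real)^i / (real i + 1) \<le> (1/2)^i / (real j + 1)"
        using \<open>j < i\<close> by (intro divide_left_mono) auto
      then show "norm ((T ^^ snd (snd (snd (h ! j)))) z) \<le> (1/2)^i / (real j + 1)" using 2 by linarith
    next
      fix k assume "k \<le> i"
      then have "avec h a k \<in> O2" unfolding O2_def by auto
      then have "norm ((T ^^ p m2) (avec h a k)) \<le> (1/2) ^ i / (real i + 1)" using m2 by blast
      moreover have "(1/2::real) ^ i / (real i + 1) \<le> 1 / (real i + 1)"
        using half_le1 by (intro divide_right_mono) auto
      ultimately show "norm ((T ^^ p m2) (avec h a k)) \<le> 1 / (real i + 1)" by linarith
    next
      fix l assume "l \<le> i"
      then have "zvec h z l \<in> O2" unfolding O2_def by auto
      then have "norm ((T ^^ p m2) (zvec h z l)) \<le> (1/2) ^ i / (real i + 1)" using m2 by blast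
      moreover have "(1/2::real) ^ i / (real i + 1) \<le> (1/2) ^ l / (real i + 1)"
        using half_mono[OF \<open>l \<le> i\<close>] by (intro divide_right_mono) auto
      ultimately show "norm ((T ^^ p m2) (zvec h z l)) \<le> (1/2) ^ l / (real i + 1)" by linarith
    qed
  qed
qed

end


context LYsetup begin

primrec hist2 :: "(nat \<Rightarrow> 'a) \<Rightarrow> (nat \<Rightarrow> real) \<Rightarrow> nat \<Rightarrow> ('a \<times> 'a \<times> nat \<times> nat) list" where
  "hist2 t r 0 = []"
| "hist2 t r (Suc n) = hist2 t r n @ [SOME d. good2 t r (hist2 t r n) d]"

lemma hist2_len[simp]: "length (hist2 t r n) = n"
  by (induction n) auto

lemma hist2_nth: "k < n \<Longrightarrow> hist2 t r n ! k = hist2 t r (Suc k) ! k"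
proof (induction n)
  case 0 then show ?case by simp
next
  case (Suc n)
  show ?case
  proof (cases "k < n")
    case True
    then show ?thesis using Suc by (simp add: nth_append)
  next
    case False
    then have "k = n" using Suc by simp
    then show ?thesis by simp
  qed
qed

lemma hist2_good:
  assumes c2: "\<forall>C. \<exists>m x. norm ((T ^^ p m) x) > C * norm x"
    and rpos: "\<forall>k. r k > 0"
  shows "\<forall>k<n. good2 t r (hist2 t r k) (hist2 t r n ! k)"
proof (induction n)
  case 0 then show ?case by simp
next
  case (Suc n)
  have hA: "\<forall>k<length (hist2 t r n). fst (hist2 t r n ! k) \<in> Aset \<and> fst (snd (hist2 t r n ! k)) \<in> Aset"
  proof (intro allI impI)
    fix k assume "k < length (hist2 t r n)"
    then have "good2 t r (hist2 t r k) (hist2 t r n ! k)" using Suc by simp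
    then show "fst (hist2 t r n ! k) \<in> Aset \<and> fst (snd (hist2 t r n ! k)) \<in> Aset"
      unfolding good2_def by (auto split: prod.splits)
  qed
  have ex: "\<exists>d. good2 t r (hist2 t r n) d"
    by (rule ex_good2[OF c2 hA]) (use rpos in auto)
  show ?case
  proof (intro allI impI)
    fix k assume "k < Suc n"
    show "good2 t r (hist2 t r k) (hist2 t r (Suc n) ! k)"
    proof (cases "k < n")
      case True
      then show ?thesis using Suc by (simp add: nth_append)
    next
      case False
      then have "k = n" using \<open>k < Suc n\<close> by simp
      then show ?thesis using someI_ex[OF ex] by (simp add: nth_append)
    qed
  qed
qed

end


context LYsetup begin

lemma span_repr:
  assumes "v \<in> span (range y)"
  shows "\<exists>K c. finite K \<and> v = (\<Sum>k\<in>K. sm (c k) (y k))"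
proof -
  obtain tt rr where tt: "finite tt" "tt \<subseteq> range y" "v = (\<Sum>a\<in>tt. sm (rr a) a)"
    using assms unfolding span_explicit by blast
  define g where "g a = (SOME k. y k = a)" for a
  have yg: "y (g a) = a" if "a \<in> tt" for a
    using that tt(2) unfolding g_def by (metis (mono_tags, lifting) imageE someI subsetD)
  have inj: "inj_on g tt" by (metis inj_onI yg)
  have "(\<Sum>k\<in>g ` tt. sm (rr (y k)) (y k)) = (\<Sum>a\<in>tt. sm (rr (y (g a))) (y (g a)))"
    by (simp add: sum.reindex[OF inj] comp_def)
  also have "\<dots> = v" using tt(3) yg by simp
  finally show ?thesis using tt(1) by (intro exI[of _ "g ` tt"] exI[of _ "\<lambda>k. rr (y k)"]) auto
qed

context
  fixes t :: "nat \<Rightarrow> 'a" and r :: "nat \<Rightarrow> real"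
  assumes c2: "\<forall>C. \<exists>m x. norm ((T ^^ p m) x) > C * norm x"
    and rpos: "\<forall>k. 0 < r k \<and> r k \<le> 1"
begin

definition D2 :: "nat \<Rightarrow> 'a \<times> 'a \<times> nat \<times> nat" where "D2 k = hist2 t r (Suc k) ! k"
definition aa :: "nat \<Rightarrow> 'a" where "aa k = fst (D2 k)"
definition zz :: "nat \<Rightarrow> 'a" where "zz k = fst (snd (D2 k))"
definition NN :: "nat \<Rightarrow> nat" where "NN k = fst (snd (snd (D2 k)))"
definition MM :: "nat \<Rightarrow> nat" where "MM k = snd (snd (snd (D2 k)))"

lemma D2_good: "good2 t r (hist2 t r i) (D2 i)"
  using hist2_good[OF c2, of r "Suc i" t] rpos unfolding D2_def by auto

lemma hist_D2: "j < i \<Longrightarrow> hist2 t r i ! j = D2 j"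
  unfolding D2_def by (rule hist2_nth)

lemma avec_D2: "k \<le> i \<Longrightarrow> avec (hist2 t r i) (aa i) k = aa k"
  unfolding avec_def aa_def using hist_D2 by auto

lemma zvec_D2: "k \<le> i \<Longrightarrow> zvec (hist2 t r i) (zz i) k = zz k"
  unfolding zvec_def zz_def using hist_D2 by auto

lemma D2_eq: "D2 i = (aa i, zz i, NN i, MM i)"
  unfolding aa_def zz_def NN_def MM_def by simp

lemma F_all:
  "aa i \<in> Aset \<and> norm (aa i - t i) < r i / 2 \<and>
   zz i \<in> Aset \<and> norm (zz i) \<le> r (own i) / 8 * (1/2) ^ i \<and>
   (\<forall>k\<le>i. norm ((T ^^ NN i) (aa k)) \<le> 1) \<and>
   (\<forall>l<i. norm ((T ^^ NN i) (zz l)) \<le> (1/2) ^ l) \<and>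
   norm ((T ^^ NN i) (zz i)) \<ge> real i + 1 \<and>
   (\<forall>j<i. norm ((T ^^ NN j) (zz i)) \<le> (1/2) ^ i \<and>
          norm ((T ^^ MM j) (zz i)) \<le> (1/2) ^ i / (real j + 1)) \<and>
   (\<forall>k\<le>i. norm ((T ^^ MM i) (aa k)) \<le> 1 / (real i + 1)) \<and>
   (\<forall>l\<le>i. norm ((T ^^ MM i) (zz l)) \<le> (1/2) ^ l / (real i + 1))"
proof -
  have g: "good2 t r (hist2 t r i) (aa i, zz i, NN i, MM i)" using D2_good D2_eq by metis
  have e1: "fst (snd (snd (hist2 t r i ! j))) = NN j" "snd (snd (snd (hist2 t r i ! j))) = MM j"
    if "j < i" for j using hist_D2[OF that] unfolding NN_def MM_def by auto
  have zl: "zvec (hist2 t r i) (zz i) l = zz l" if "l < i" for l using zvec_D2[of l i] that by simp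
  show ?thesis
    using g unfolding good2_def prod.case hist2_len
    by (simp add: avec_D2 zvec_D2 e1 zl)
qed

lemma F1: "aa i \<in> Aset" "norm (aa i - t i) < r i / 2" using F_all by auto
lemma F2: "zz i \<in> Aset" "norm (zz i) \<le> r (own i) / 8 * (1/2) ^ i" using F_all by auto
lemma F3: "k \<le> i \<Longrightarrow> norm ((T ^^ NN i) (aa k)) \<le> 1" using F_all by auto
lemma F5: "norm ((T ^^ NN i) (zz i)) \<ge> real i + 1" using F_all by auto
lemma F7: "k \<le> i \<Longrightarrow> norm ((T ^^ MM i) (aa k)) \<le> 1 / (real i + 1)" using F_all by auto

lemma G1: "l \<noteq> i \<Longrightarrow> norm ((T ^^ NN i) (zz l)) \<le> (1/2) ^ l"
proof (cases "l < i")
  case True then show ?thesis using F_all[of i] by auto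
next
  case False
  assume "l \<noteq> i"
  then have "i < l" using False by simp
  then show ?thesis using F_all[of l] by auto
qed

lemma G2: "norm ((T ^^ MM i) (zz l)) \<le> (1/2) ^ l / (real i + 1)"
proof (cases "l \<le> i")
  case True then show ?thesis using F_all[of i] by auto
next
  case False
  then have "i < l" by simp
  then show ?thesis using F_all[of l] by auto
qed

lemma zz_small: "norm (zz l) \<le> (1/2) ^ l"
proof -
  have "r (own l) / 8 * (1/2) ^ l \<le> 1 * (1/2::real) ^ l"
    using rpos[rule_format, of "own l"] by (intro mult_right_mono) (auto simp: divide_le_eq)
  then show ?thesis using F2(2)[of l] by linarith
qed

lemma summable_bound:
  fixes f :: "nat \<Rightarrow> 'b::banach"
  shows "summable g \<Longrightarrow> (\<And>n. norm (f n) \<le> g n) \<Longrightarrow> summable f"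
  by (rule summable_comparison_test') auto

lemma half_summable: "summable (\<lambda>l. (1/2::real) ^ l)" by (rule summable_geometric) simp
lemma half_suminf: "(\<Sum>l. (1/2::real) ^ l) = 2" by (subst suminf_geometric) auto

definition yy :: "nat \<Rightarrow> 'a" where
  "yy k = aa k + (\<Sum>l. if own l = k then zz l else 0)"

lemma summ_z: "summable (\<lambda>l. if own l = k then zz l else 0)"
  by (rule summable_bound[OF half_summable]) (use zz_small in auto)

lemma T_yy: "(T ^^ n) (yy k) = (T ^^ n) (aa k) + (\<Sum>l. if own l = k then (T ^^ n) (zz l) else 0)"
proof -
  have "(T ^^ n) (\<Sum>l. if own l = k then zz l else 0) = (\<Sum>l. (T ^^ n) (if own l = k then zz l else 0))"
    by (rule bounded_linear.suminf[OF bl_pow summ_z])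
  also have "\<dots> = (\<Sum>l. if own l = k then (T ^^ n) (zz l) else 0)"
    by (intro suminf_cong) auto
  finally show ?thesis unfolding yy_def pow_add by simp
qed

lemma yy_close: "norm (yy k - t k) < r k"
proof -
  let ?s = "\<lambda>l. if own l = k then zz l else 0"
  have b: "norm (?s l) \<le> r k / 8 * (1/2) ^ l" for l
  proof (cases "own l = k")
    case True then show ?thesis using F2(2)[of l] by simp
  next
    case False
    have "0 \<le> r k" using rpos[rule_format, of k] by simp
    then show ?thesis using False by simp
  qed
  have sb: "summable (\<lambda>l. r k / 8 * (1/2::real) ^ l)" by (intro summable_mult half_summable)
  have sn: "summable (\<lambda>l. norm (?s l))"
    by (rule summable_bound[OF sb]) (use b in auto)
  have "norm (suminf ?s) \<le> (\<Sum>l. norm (?s l))" by (rule summable_norm[OF sn])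
  also have "\<dots> \<le> (\<Sum>l. r k / 8 * (1/2) ^ l)" by (rule suminf_le[OF b sn sb])
  also have "\<dots> = r k / 8 * 2" using suminf_mult[OF half_summable, of "r k / 8"] half_suminf by simp
  also have "\<dots> = r k / 4" by simp
  finally have 1: "norm (suminf ?s) \<le> r k / 4" .
  have 2: "norm (aa k - t k) < r k / 2" by (rule F1(2))
  have eq: "yy k - t k = (aa k - t k) + suminf ?s" unfolding yy_def by simp
  have 3: "norm (yy k - t k) \<le> norm (aa k - t k) + norm (suminf ?s)"
    by (subst eq) (rule norm_triangle_ineq)
  have "0 < r k" using rpos by simp
  then show ?thesis using 1 2 3 by linarith
qed

lemma small_est: "k \<le> i \<Longrightarrow> norm ((T ^^ MM i) (yy k)) \<le> 3 / (real i + 1)"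
proof -
  assume ki: "k \<le> i"
  let ?s = "\<lambda>l. if own l = k then (T ^^ MM i) (zz l) else 0"
  have b: "norm (?s l) \<le> (1/2) ^ l / (real i + 1)" for l
    using G2[of i l] by auto
  have sb: "summable (\<lambda>l. (1/2::real) ^ l / (real i + 1))" by (intro summable_divide half_summable)
  have sn: "summable (\<lambda>l. norm (?s l))"
    by (rule summable_bound[OF sb]) (use b in auto)
  have "norm (suminf ?s) \<le> (\<Sum>l. norm (?s l))" by (rule summable_norm[OF sn])
  also have "\<dots> \<le> (\<Sum>l. (1/2) ^ l / (real i + 1))" by (rule suminf_le[OF b sn sb])
  also have "\<dots> = 2 / (real i + 1)" by (simp add: suminf_divide[OF half_summable] half_suminf)
  finally have 1: "norm (suminf ?s) \<le> 2 / (real i + 1)" .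
  have 2: "norm ((T ^^ MM i) (aa k)) \<le> 1 / (real i + 1)" by (rule F7[OF ki])
  have "norm ((T ^^ MM i) (yy k)) \<le> norm ((T ^^ MM i) (aa k)) + norm (suminf ?s)"
    unfolding T_yy by (rule norm_triangle_ineq)
  also have "\<dots> \<le> 1 / (real i + 1) + 2 / (real i + 1)" using 1 2 by linarith
  also have "\<dots> = 3 / (real i + 1)" by (simp add: field_simps)
  finally show ?thesis .
qed

lemma hump_est:
  "k \<le> i \<Longrightarrow> norm ((T ^^ NN i) (yy k) - (if own i = k then (T ^^ NN i) (zz i) else 0)) \<le> 3"
proof -
  assume ki: "k \<le> i"
  let ?s = "\<lambda>l. if own l = k then (T ^^ NN i) (zz l) else 0"
  let ?s2 = "\<lambda>l. if l = i then 0 else ?s l"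
  have bb: "norm (?s l) \<le> (1/2::real) ^ l * Kb (NN i)" for l
  proof (cases "own l = k")
    case True
    have "norm ((T ^^ NN i) (zz l)) \<le> norm (zz l) * Kb (NN i)" by (rule Kb(2))
    also have "\<dots> \<le> (1/2) ^ l * Kb (NN i)" using zz_small Kb(1) by (intro mult_right_mono) (auto intro: less_imp_le)
    finally show ?thesis using True by simp
  next
    case False then show ?thesis using Kb(1)[of "NN i"] by simp
  qed
  have ss: "summable ?s"
    by (rule summable_bound[OF _ bb]) (intro summable_mult2 half_summable)
  have "?s sums suminf ?s" using ss by (rule summable_sums)
  from sums_diff[OF this sums_single[of i ?s]]
  have "(\<lambda>l. ?s l - (if l = i then ?s l else 0)) sums (suminf ?s - ?s i)" .
  moreover have "(\<lambda>l. ?s l - (if l = i then ?s l else 0)) = ?s2" by auto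
  ultimately have s2sums: "?s2 sums (suminf ?s - ?s i)" by simp
  have b: "norm (?s2 l) \<le> (1/2) ^ l" for l
    using G1[of l i] by auto
  have sn: "summable (\<lambda>l. norm (?s2 l))"
    by (rule summable_bound[OF half_summable]) (use b in auto)
  have "norm (suminf ?s2) \<le> (\<Sum>l. norm (?s2 l))" by (rule summable_norm[OF sn])
  also have "\<dots> \<le> (\<Sum>l. (1/2) ^ l)" by (rule suminf_le[OF b sn half_summable])
  finally have 1: "norm (suminf ?s - ?s i) \<le> 2" using sums_unique[OF s2sums] half_suminf by simp
  have 2: "norm ((T ^^ NN i) (aa k)) \<le> 1" by (rule F3[OF ki])
  have eq: "(T ^^ NN i) (yy k) - (if own i = k then (T ^^ NN i) (zz i) else 0)
        = (T ^^ NN i) (aa k) + (suminf ?s - ?s i)"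
    unfolding T_yy by simp
  show ?thesis
    by (subst eq) (use 1 2 norm_triangle_ineq[of "(T ^^ NN i) (aa k)" "suminf ?s - ?s i"] in linarith)
qed


lemma own_encode[simp]: "own (prod_encode (k, j)) = k"
  unfolding own_def by simp

theorem case2_main:
  "\<exists>y. (\<forall>k. norm (y k - t k) < r k) \<and> (\<forall>v\<in>span (range y). v \<noteq> 0 \<longrightarrow> irregular_vector T v)"
proof (intro exI[of _ yy] conjI allI ballI impI)
  fix k show "norm (yy k - t k) < r k" by (rule yy_close)
next
  fix v assume v: "v \<in> span (range yy)" and vnz: "v \<noteq> 0"
  obtain K c where K: "finite K" "v = (\<Sum>k\<in>K. sm (c k) (yy k))"
    using span_repr[OF v] by blast
  have Tv: "(T ^^ n) v = (\<Sum>k\<in>K. sm (c k) ((T ^^ n) (yy k)))" for n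
    by (simp add: K(2) pow_sum pow_sm)
  define S where "S = (\<Sum>k\<in>K. norm (c k))"
  have S0: "S \<ge> 0" unfolding S_def by (simp add: sum_nonneg)
  define Ks where "Ks = (\<Sum>k\<in>K. k)"
  have kKs: "k \<le> Ks" if "k \<in> K" for k
    unfolding Ks_def using K(1) that by (intro member_le_sum) auto
  have sm_norm_sum: "norm (\<Sum>k\<in>K. sm (c k) (X k)) \<le> (\<Sum>k\<in>K. norm (c k) * norm (X k))" for X
    by (rule order_trans[OF norm_sum]) (simp add: nrm)
  have small: "\<forall>e>0. \<exists>n. norm ((T ^^ n) v) < e"
  proof (intro allI impI)
    fix e :: real assume e: "e > 0"
    define i where "i = Ks + nat \<lceil>3 * S / e\<rceil>"
    have "3 * S / e \<le> real i" unfolding i_def by linarith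
    then have "3 * S < e * (real i + 1)" using e by (simp add: divide_le_eq algebra_simps)
    then have lt: "S * (3 / (real i + 1)) < e" by (simp add: field_simps)
    have "norm ((T ^^ MM i) v) \<le> (\<Sum>k\<in>K. norm (c k) * norm ((T ^^ MM i) (yy k)))"
      unfolding Tv by (rule sm_norm_sum)
    also have "\<dots> \<le> (\<Sum>k\<in>K. norm (c k) * (3 / (real i + 1)))"
    proof (intro sum_mono mult_left_mono)
      fix k assume "k \<in> K"
      then have "k \<le> i" using kKs unfolding i_def by fastforce
      then show "norm ((T ^^ MM i) (yy k)) \<le> 3 / (real i + 1)" by (rule small_est)
    qed simp
    also have "\<dots> = S * (3 / (real i + 1))" unfolding S_def by (simp add: sum_distrib_right sum_divide_distrib)
    finally show "\<exists>n. norm ((T ^^ n) v) < e" using lt by (intro exI[of _ "MM i"]) linarith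
  qed
  obtain k0 where k0: "k0 \<in> K" "c k0 \<noteq> 0"
  proof (rule ccontr)
    assume "\<not> thesis"
    then have "\<forall>k\<in>K. c k = 0" using that by blast
    then have "v = 0" unfolding K(2) by simp
    then show False using vnz by simp
  qed
  have ub: "\<not> bdd v"
    unfolding not_bdd
  proof
    fix B :: real
    define j where "j = Ks + nat \<lceil>(\<bar>B\<bar> + 3 * S) / norm (c k0)\<rceil>"
    define i where "i = prod_encode (k0, j)"
    have ij: "j \<le> i" unfolding i_def by (rule le_prod_encode_2)
    have oi: "own i = k0" unfolding i_def by simp
    have kKi: "k \<le> i" if "k \<in> K" for k using kKs[OF that] ij unfolding j_def by linarith
    have cpos: "norm (c k0) > 0" using k0 by simp
    define R where "R k = (T ^^ NN i) (yy k) - (if own i = k then (T ^^ NN i) (zz i) else 0)" for k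
    have Rb: "norm (R k) \<le> 3" if "k \<in> K" for k
      unfolding R_def using hump_est[OF kKi[OF that]] .
    have "(T ^^ NN i) v = (\<Sum>k\<in>K. sm (c k) (R k)) + (\<Sum>k\<in>K. if own i = k then sm (c k) ((T ^^ NN i) (zz i)) else 0)"
      unfolding Tv R_def by (simp add: scale_right_diff_distrib sum.distrib[symmetric] if_distrib[of "sm _"] cong: if_cong)
    also have "(\<Sum>k\<in>K. if own i = k then sm (c k) ((T ^^ NN i) (zz i)) else 0) = sm (c k0) ((T ^^ NN i) (zz i))"
      using k0(1) oi by (simp add: sum.delta' K(1))
    finally have eqv: "(T ^^ NN i) v = (\<Sum>k\<in>K. sm (c k) (R k)) + sm (c k0) ((T ^^ NN i) (zz i))" .
    have n1: "norm (\<Sum>k\<in>K. sm (c k) (R k)) \<le> 3 * S"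
    proof -
      have "norm (\<Sum>k\<in>K. sm (c k) (R k)) \<le> (\<Sum>k\<in>K. norm (c k) * norm (R k))" by (rule sm_norm_sum)
      also have "\<dots> \<le> (\<Sum>k\<in>K. norm (c k) * 3)" by (intro sum_mono mult_left_mono Rb) auto
      also have "\<dots> = 3 * S" unfolding S_def by (simp add: sum_distrib_left mult.commute)
      finally show ?thesis .
    qed
    have n2: "norm (sm (c k0) ((T ^^ NN i) (zz i))) \<ge> norm (c k0) * (real i + 1)"
      unfolding nrm using F5[of i] cpos by (simp add: mult_left_mono)
    have "(\<bar>B\<bar> + 3 * S) / norm (c k0) \<le> real j" unfolding j_def by linarith
    also have "\<dots> < real i + 1" using ij by simp
    finally have "\<bar>B\<bar> + 3 * S < norm (c k0) * (real i + 1)" using cpos by (simp add: divide_less_eq mult.commute)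
    moreover have "norm (c k0) * (real i + 1) - 3 * S \<le> norm ((T ^^ NN i) v)"
      unfolding eqv using n1 n2 norm_triangle_ineq3[of "sm (c k0) ((T ^^ NN i) (zz i))" "- (\<Sum>k\<in>K. sm (c k) (R k))"]
      by (simp add: add.commute)
    ultimately show "\<exists>n. norm ((T ^^ n) v) > B" by (intro exI[of _ "NN i"]) linarith
  qed
  show "irregular_vector T v" by (rule irregularI[OF small ub])
qed

end
end


context LYsetup begin

lemma bl_sm: "bounded_linear (\<lambda>s. sm s a)"
proof (rule bounded_linear_intro[of _ "norm a"])
  show "sm (s1 + s2) a = sm s1 a + sm s2 a" for s1 s2 by (rule scale_left_distrib)
  show "sm (r *\<^sub>R s) a = r *\<^sub>R sm s a" for r s
    by (simp add: scaleR_conv_of_real ofr[symmetric])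
  show "norm (sm s a) \<le> norm s * norm a" for s by (simp add: nrm)
qed

lemma comb_compact:
  assumes "finite F"
  shows "compact {(\<Sum>f\<in>F. sm (u f) f) | u. \<forall>f\<in>F. norm (u f) \<le> K}"
  using assms
proof (induction F rule: finite_induct)
  case empty
  have "{(\<Sum>f\<in>{}. sm (u f) f) | u. \<forall>f\<in>{}. norm (u f) \<le> K} = {0}" by auto
  then show ?case by simp
next
  case (insert a F)
  let ?S = "{(\<Sum>f\<in>F. sm (u f) f) | u. \<forall>f\<in>F. norm (u f) \<le> K}"
  let ?g = "\<lambda>z::'k \<times> 'a. sm (fst z) a + snd z"
  have blg: "bounded_linear ?g"
    by (intro bounded_linear_add bounded_linear_compose[OF bl_sm bounded_linear_fst] bounded_linear_snd)
  have eq: "{(\<Sum>f\<in>insert a F. sm (u f) f) | u. \<forall>f\<in>insert a F. norm (u f) \<le> K} = ?g ` (cball 0 K \<times> ?S)"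
  proof (intro equalityI subsetI)
    fix x assume "x \<in> {(\<Sum>f\<in>insert a F. sm (u f) f) | u. \<forall>f\<in>insert a F. norm (u f) \<le> K}"
    then obtain u where u: "x = (\<Sum>f\<in>insert a F. sm (u f) f)" "\<forall>f\<in>insert a F. norm (u f) \<le> K" by blast
    have "x = ?g (u a, \<Sum>f\<in>F. sm (u f) f)" using u(1) insert by simp
    moreover have "(u a, \<Sum>f\<in>F. sm (u f) f) \<in> cball 0 K \<times> ?S" using u(2) by auto
    ultimately show "x \<in> ?g ` (cball 0 K \<times> ?S)" by blast
  next
    fix x assume "x \<in> ?g ` (cball 0 K \<times> ?S)"
    then obtain s u where su: "norm s \<le> K" "\<forall>f\<in>F. norm (u f) \<le> K" "x = sm s a + (\<Sum>f\<in>F. sm (u f) f)"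
      by auto
    define u' where "u' = u(a := s)"
    have "(\<Sum>f\<in>F. sm (u' f) f) = (\<Sum>f\<in>F. sm (u f) f)"
      unfolding u'_def using insert(2) by (intro sum.cong) auto
    then have "x = (\<Sum>f\<in>insert a F. sm (u' f) f)" using su(3) insert by (simp add: u'_def)
    moreover have "\<forall>f\<in>insert a F. norm (u' f) \<le> K" using su by (auto simp: u'_def)
    ultimately show "x \<in> {(\<Sum>f\<in>insert a F. sm (u f) f) | u. \<forall>f\<in>insert a F. norm (u f) \<le> K}" by blast
  qed
  show ?case
    unfolding eq
    by (intro compact_continuous_image linear_continuous_on[OF blg] compact_Times compact_cball insert(3))
qed

lemma Bd_closed: "closed {b. \<forall>n. norm ((T ^^ n) b) \<le> K}"
proof -
  have "{b. \<forall>n. norm ((T ^^ n) b) \<le> K} = (\<Inter>n. {b. norm ((T ^^ n) b) \<le> K})" by auto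
  moreover have "closed {b. norm ((T ^^ n) b) \<le> K}" for n
    by (intro closed_Collect_le continuous_intros continuous_on_subset[OF pow_cont]) auto
  ultimately show ?thesis by auto
qed

end


context LYsetup begin

lemma sum_sm_minus: "(\<Sum>f\<in>F. sm (- u f) f) = - (\<Sum>f\<in>F. sm (u f) f)"
  by (simp only: scale_minus_left sum_negf)

lemma sum_sm_diff: "(\<Sum>f\<in>F. sm (u f - v f) f) = (\<Sum>f\<in>F. sm (u f) f) - (\<Sum>f\<in>F. sm (v f) f)"
  by (simp add: scale_left_diff_distrib sum_subtractf)

lemma dec_exists:
  assumes fin: "finite F"
    and H: "\<forall>v. \<exists>e\<in>span F. bdd (v + e)"
  shows "\<exists>D\<ge>0. \<forall>x. \<exists>u. (\<forall>f\<in>F. norm (u f) \<le> D * norm x) \<and>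
           (\<forall>n. norm ((T ^^ n) (x - (\<Sum>f\<in>F. sm (u f) f))) \<le> D * norm x)"
proof -
  define C where "C K = {x. \<exists>u. (\<forall>f\<in>F. norm (u f) \<le> real K) \<and>
      (\<forall>n. norm ((T ^^ n) (x - (\<Sum>f\<in>F. sm (u f) f))) \<le> real K)}" for K :: nat
  have cover: "\<Union>(range C) = UNIV"
  proof (intro equalityI subsetI)
    fix x :: 'a
    obtain e where e: "e \<in> span F" "bdd (x + e)" using H by blast
    obtain u where u: "e = (\<Sum>f\<in>F. sm (u f) f)" using e(1) unfolding span_finite[OF fin] by blast
    obtain B where B: "\<forall>n. norm ((T ^^ n) (x + e)) \<le> B" using e(2) unfolding bdd_def by blast
    define K where "K = nat \<lceil>(\<Sum>f\<in>F. norm (u f)) + \<bar>B\<bar>\<rceil>"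
    have "x \<in> C K" unfolding C_def
    proof (intro CollectI exI[of _ "\<lambda>f. - u f"] conjI ballI allI)
      fix f assume "f \<in> F"
      then have "norm (u f) \<le> (\<Sum>f\<in>F. norm (u f))" using fin by (intro member_le_sum) auto
      then show "norm (- u f) \<le> real K" unfolding K_def
        by (smt (verit, ccfv_SIG) norm_minus_cancel of_nat_ceiling sum_nonneg norm_ge_zero)
    next
      fix n
      have "x - (\<Sum>f\<in>F. sm (- u f) f) = x + e" by (simp only: sum_sm_minus u diff_minus_eq_add)
      then have "norm ((T ^^ n) (x - (\<Sum>f\<in>F. sm (- u f) f))) \<le> B" using B[rule_format, of n] by (simp only:)
      moreover have "B \<le> real K" unfolding K_def
        by (smt (verit, ccfv_SIG) of_nat_ceiling sum_nonneg norm_ge_zero)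
      ultimately show "norm ((T ^^ n) (x - (\<Sum>f\<in>F. sm (- u f) f))) \<le> real K" by linarith
    qed
    then show "x \<in> \<Union>(range C)" by blast
  qed simp
  have closedC: "closed (C K)" for K
  proof -
    define Bd where "Bd = {b. \<forall>n. norm ((T ^^ n) b) \<le> real K}"
    define Cm where "Cm = {(\<Sum>f\<in>F. sm (u f) f) | u. \<forall>f\<in>F. norm (u f) \<le> real K}"
    have "C K = (\<Union>b\<in>Bd. \<Union>w\<in>Cm. {b + w})"
    proof (intro equalityI subsetI)
      fix x assume "x \<in> C K"
      then obtain u where u: "\<forall>f\<in>F. norm (u f) \<le> real K"
          "\<forall>n. norm ((T ^^ n) (x - (\<Sum>f\<in>F. sm (u f) f))) \<le> real K" unfolding C_def by blast
      have "x - (\<Sum>f\<in>F. sm (u f) f) \<in> Bd" "(\<Sum>f\<in>F. sm (u f) f) \<in> Cm"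
        using u unfolding Bd_def Cm_def by blast+
      moreover have "x = (x - (\<Sum>f\<in>F. sm (u f) f)) + (\<Sum>f\<in>F. sm (u f) f)" by simp
      ultimately show "x \<in> (\<Union>b\<in>Bd. \<Union>w\<in>Cm. {b + w})" by blast
    next
      fix x assume "x \<in> (\<Union>b\<in>Bd. \<Union>w\<in>Cm. {b + w})"
      then obtain b u where bu: "b \<in> Bd" "\<forall>f\<in>F. norm (u f) \<le> real K" "x = b + (\<Sum>f\<in>F. sm (u f) f)"
        unfolding Cm_def by blast
      have "x - (\<Sum>f\<in>F. sm (u f) f) = b" using bu(3) by simp
      then show "x \<in> C K" unfolding C_def using bu(1,2) unfolding Bd_def by auto
    qed
    moreover have "closed Bd" unfolding Bd_def by (rule Bd_closed)
    moreover have "compact Cm" unfolding Cm_def by (rule comb_compact[OF fin])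
    ultimately show ?thesis using closed_compact_sums by metis
  qed
  have "\<exists>K. interior (C K) \<noteq> {}"
  proof (rule ccontr)
    assume "\<not> (\<exists>K. interior (C K) \<noteq> {})"
    then have "euclidean interior_of \<Union>(range C) = {}"
      by (intro Baire_category_alt) (auto simp: completely_metrizable_space_euclidean closedC)
    then show False using cover by simp
  qed
  then obtain K x1 where "x1 \<in> interior (C K)" by blast
  then obtain \<rho> where rho: "\<rho> > 0" "ball x1 \<rho> \<subseteq> C K"
    by (meson interior_subset open_contains_ball_eq open_interior subset_trans)
  have small: "\<exists>u. (\<forall>f\<in>F. norm (u f) \<le> 2 * real K) \<and>
      (\<forall>n. norm ((T ^^ n) (x - (\<Sum>f\<in>F. sm (u f) f))) \<le> 2 * real K)" if "norm x < \<rho>" for x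
  proof -
    have "x1 + x \<in> C K" "x1 \<in> C K" using rho that by (auto simp: dist_norm)
    then obtain u1 u0 where u1: "\<forall>f\<in>F. norm (u1 f) \<le> real K"
        "\<forall>n. norm ((T ^^ n) (x1 + x - (\<Sum>f\<in>F. sm (u1 f) f))) \<le> real K"
      and u0: "\<forall>f\<in>F. norm (u0 f) \<le> real K"
        "\<forall>n. norm ((T ^^ n) (x1 - (\<Sum>f\<in>F. sm (u0 f) f))) \<le> real K"
      unfolding C_def by blast
    show ?thesis
    proof (intro exI[of _ "\<lambda>f. u1 f - u0 f"] conjI ballI allI)
      fix f assume "f \<in> F"
      then show "norm (u1 f - u0 f) \<le> 2 * real K"
        using u1(1) u0(1) norm_triangle_ineq4[of "u1 f" "u0 f"] by fastforce
    next
      fix n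
      have eqA: "x - (\<Sum>f\<in>F. sm (u1 f - u0 f) f) = (x1 + x - (\<Sum>f\<in>F. sm (u1 f) f)) - (x1 - (\<Sum>f\<in>F. sm (u0 f) f))"
        by (simp add: sum_sm_diff)
      have "(T ^^ n) (x - (\<Sum>f\<in>F. sm (u1 f - u0 f) f)) = (T ^^ n) (x1 + x - (\<Sum>f\<in>F. sm (u1 f) f)) - (T ^^ n) (x1 - (\<Sum>f\<in>F. sm (u0 f) f))"
        unfolding eqA by (rule pow_diff)
      then show "norm ((T ^^ n) (x - (\<Sum>f\<in>F. sm (u1 f - u0 f) f))) \<le> 2 * real K"
        using u1(2) u0(2) norm_triangle_ineq4 by (smt (verit))
    qed
  qed
  define D where "D = 4 * real K / \<rho>"
  have D0: "D \<ge> 0" unfolding D_def using rho by simp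
  show ?thesis
  proof (intro exI[of _ D] conjI allI D0)
    fix x :: 'a
    show "\<exists>u. (\<forall>f\<in>F. norm (u f) \<le> D * norm x) \<and>
           (\<forall>n. norm ((T ^^ n) (x - (\<Sum>f\<in>F. sm (u f) f))) \<le> D * norm x)"
    proof (cases "x = 0")
      case True
      then show ?thesis by (intro exI[of _ "\<lambda>f. 0"]) simp
    next
      case False
      define l where "l = \<rho> / (2 * norm x)"
      have lpos: "l > 0" unfolding l_def using rho False by simp
      have "norm (l *\<^sub>R x) < \<rho>" unfolding l_def using rho False by simp
      then obtain u' where u': "\<forall>f\<in>F. norm (u' f) \<le> 2 * real K"
          "\<forall>n. norm ((T ^^ n) (l *\<^sub>R x - (\<Sum>f\<in>F. sm (u' f) f))) \<le> 2 * real K"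
        using small by blast
      have Dl: "2 * real K / l = D * norm x" unfolding D_def l_def using False rho by (simp add: field_simps)
      have smf: "sm (u' f / of_real l) f = (1 / l) *\<^sub>R sm (u' f) f" for f
      proof -
        have "u' f / of_real l = of_real (1 / l) * u' f" by (simp add: divide_inverse mult.commute)
        then show ?thesis by (simp add: ofr[symmetric])
      qed
      have eq: "x - (\<Sum>f\<in>F. sm (u' f / of_real l) f) = (1 / l) *\<^sub>R (l *\<^sub>R x - (\<Sum>f\<in>F. sm (u' f) f))"
        using lpos by (simp add: smf scaleR_sum_right scaleR_diff_right)
      show ?thesis
      proof (intro exI[of _ "\<lambda>f. u' f / of_real l"] conjI ballI allI)
        fix f assume "f \<in> F"
        then have "norm (u' f) / l \<le> 2 * real K / l" using u'(1) lpos by (intro divide_right_mono) auto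
        then show "norm (u' f / of_real l) \<le> D * norm x" using Dl lpos by (simp add: norm_divide)
      next
        fix n
        have "norm ((T ^^ n) (x - (\<Sum>f\<in>F. sm (u' f / of_real l) f)))
              = (1 / l) * norm ((T ^^ n) (l *\<^sub>R x - (\<Sum>f\<in>F. sm (u' f) f)))"
          unfolding eq pow_scaleR using lpos by simp
        also have "\<dots> \<le> (1 / l) * (2 * real K)" using u'(2) lpos by (intro mult_left_mono) auto
        also have "\<dots> = D * norm x" using Dl by simp
        finally show "norm ((T ^^ n) (x - (\<Sum>f\<in>F. sm (u' f / of_real l) f))) \<le> D * norm x" .
      qed
    qed
  qed
qed

end


context LYsetup begin

lemma baire_core:
  assumes fin: "finite F"
    and indep: "\<forall>e\<in>span F. bdd e \<longrightarrow> e = 0"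
    and allA: "\<forall>x. x \<in> Aset"
  shows "\<exists>v. \<forall>e\<in>span F. \<not> bdd (v + e)"
proof (rule ccontr)
  assume "\<not> ?thesis"
  then have H: "\<forall>v. \<exists>e\<in>span F. bdd (v + e)" by blast
  obtain D where D0: "D \<ge> 0" and DEC: "\<forall>x. \<exists>u. (\<forall>f\<in>F. norm (u f) \<le> D * norm x) \<and>
           (\<forall>n. norm ((T ^^ n) (x - (\<Sum>f\<in>F. sm (u f) f))) \<le> D * norm x)"
    using dec_exists[OF fin H] by blast
  have uniq: "e1 = e2" if "e1 \<in> span F" "e2 \<in> span F" "bdd (x - e1)" "bdd (x - e2)" for x e1 e2
  proof -
    have "bdd (e1 - e2)" using bdd_diff[OF that(4) that(3)] by simp
    moreover have "e1 - e2 \<in> span F" using that by (simp add: span_diff)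
    ultimately show ?thesis using indep by auto
  qed
  define P where "P x = (THE e. e \<in> span F \<and> bdd (x - e))" for x
  have P_eq: "P x = e" if "e \<in> span F" "bdd (x - e)" for x e
    unfolding P_def using that uniq by (intro the_equality) auto
  have P_props: "P x \<in> span F \<and> bdd (x - P x) \<and> (\<forall>n. norm ((T ^^ n) (x - P x)) \<le> D * norm x) \<and>
       (\<exists>u. P x = (\<Sum>f\<in>F. sm (u f) f) \<and> (\<forall>f\<in>F. norm (u f) \<le> D * norm x))" for x
  proof -
    obtain u where u: "\<forall>f\<in>F. norm (u f) \<le> D * norm x"
       "\<forall>n. norm ((T ^^ n) (x - (\<Sum>f\<in>F. sm (u f) f))) \<le> D * norm x" using DEC by blast
    have sp: "(\<Sum>f\<in>F. sm (u f) f) \<in> span F" by (intro span_sum span_scale span_base)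
    have bd: "bdd (x - (\<Sum>f\<in>F. sm (u f) f))" using u(2) unfolding bdd_def by blast
    have "P x = (\<Sum>f\<in>F. sm (u f) f)" by (rule P_eq[OF sp bd])
    then show ?thesis using sp bd u by auto
  qed
  have P_span: "P x \<in> span F" for x using P_props by blast
  have P_bdd: "bdd (x - P x)" for x using P_props by blast
  have P_orb: "norm ((T ^^ n) (x - P x)) \<le> D * norm x" for x n using P_props by blast
  have P_add: "P (x + y) = P x + P y" for x y
  proof (rule P_eq)
    show "P x + P y \<in> span F" by (intro span_add P_span)
    have "x + y - (P x + P y) = (x - P x) + (y - P y)" by simp
    then show "bdd (x + y - (P x + P y))" using bdd_add[OF P_bdd P_bdd] by metis
  qed
  have P_sm: "P (sm c x) = sm c (P x)" for c x
  proof (rule P_eq)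
    show "sm c (P x) \<in> span F" by (intro span_scale P_span)
    show "bdd (sm c x - sm c (P x))" using bdd_sm[OF P_bdd[of x], of c] by (simp add: scale_right_diff_distrib)
  qed
  have P_bdd0: "bdd b \<Longrightarrow> P b = 0" for b by (rule P_eq) (auto simp: span_zero)
  have P_id: "e \<in> span F \<Longrightarrow> P e = e" for e by (rule P_eq) auto
  have P_0: "P 0 = 0" by (rule P_bdd0) simp
  have P_sum: "P (sum g I) = (\<Sum>i\<in>I. P (g i))" if "finite I" for g and I :: "'c set"
    using that by (induction I rule: finite_induct) (simp_all add: P_0 P_add)
  define SF where "SF = (\<Sum>f\<in>F. norm f)"
  have SF0: "SF \<ge> 0" unfolding SF_def by (simp add: sum_nonneg)
  define D' where "D' = D * SF"
  have D'0: "D' \<ge> 0" unfolding D'_def using D0 SF0 by simp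
  have sm_sum_norm: "norm (\<Sum>f\<in>F. sm (u f) (g f)) \<le> (\<Sum>f\<in>F. norm (u f) * norm (g f))" for u g
    by (rule order_trans[OF norm_sum]) (simp add: nrm)
  have P_norm: "norm (P x) \<le> D' * norm x" for x
  proof -
    obtain u where u: "P x = (\<Sum>f\<in>F. sm (u f) f)" "\<forall>f\<in>F. norm (u f) \<le> D * norm x"
      using P_props by blast
    have "norm (P x) \<le> (\<Sum>f\<in>F. norm (u f) * norm f)" unfolding u(1) by (rule sm_sum_norm)
    also have "\<dots> \<le> (\<Sum>f\<in>F. D * norm x * norm f)" using u(2) by (intro sum_mono mult_right_mono) auto
    also have "\<dots> = D' * norm x" unfolding D'_def SF_def by (simp add: sum_distrib_left mult.commute mult.left_commute)
    finally show ?thesis .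
  qed
  have P_shift: "P ((T ^^ N) x) = P ((T ^^ N) (P x))" for N x
  proof -
    have "(T ^^ N) x = (T ^^ N) (x - P x) + (T ^^ N) (P x)" by (simp add: pow_add[symmetric])
    then have "P ((T ^^ N) x) = P ((T ^^ N) (x - P x)) + P ((T ^^ N) (P x))" by (simp add: P_add)
    moreover have "P ((T ^^ N) (x - P x)) = 0" by (intro P_bdd0 bdd_pow P_bdd)
    ultimately show ?thesis by simp
  qed
  define \<delta> where "\<delta> = 1 / (2 * (D * D' + 1))"
  have dpos: "\<delta> > 0" unfolding \<delta>_def using D0 D'0 by (simp add: add_nonneg_pos)
  have "\<forall>x\<in>T ` F. x \<in> Aset" using allA by blast
  then obtain m0 where m0: "\<forall>m\<ge>m0. \<forall>x\<in>T ` F. norm ((T ^^ p m) x) \<le> \<delta> / (real (card F) + 1)"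
    using ev_small[of "T ` F" "\<delta> / (real (card F) + 1)"] fin dpos by auto
  define N where "N = Suc (p m0)"
  have N1: "N \<ge> 1" unfolding N_def by simp
  have TNf: "norm ((T ^^ N) f) \<le> \<delta> / (real (card F) + 1)" if "f \<in> F" for f
  proof -
    have "(T ^^ N) f = (T ^^ p m0) (T f)" unfolding N_def by (simp add: funpow_swap1)
    then show ?thesis using m0 that by auto
  qed
  have sumTN: "(\<Sum>f\<in>F. norm ((T ^^ N) f)) \<le> \<delta>"
  proof -
    have "(\<Sum>f\<in>F. norm ((T ^^ N) f)) \<le> (\<Sum>f\<in>F. \<delta> / (real (card F) + 1))" by (intro sum_mono TNf)
    also have "\<dots> = real (card F) * (\<delta> / (real (card F) + 1))" by simp
    also have "\<dots> \<le> \<delta>" using dpos by (simp add: field_simps)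
    finally show ?thesis .
  qed
  have contr: "norm (P ((T ^^ N) e)) \<le> 1/2 * norm e" if "e \<in> span F" for e
  proof -
    obtain u where u: "P e = (\<Sum>f\<in>F. sm (u f) f)" "\<forall>f\<in>F. norm (u f) \<le> D * norm e"
      using P_props by blast
    have e_eq: "e = (\<Sum>f\<in>F. sm (u f) f)" using u(1) P_id[OF that] by simp
    have "P ((T ^^ N) e) = (\<Sum>f\<in>F. sm (u f) (P ((T ^^ N) f)))"
      unfolding e_eq pow_sum pow_sm P_sum[OF fin] P_sm ..
    then have "norm (P ((T ^^ N) e)) \<le> (\<Sum>f\<in>F. norm (u f) * norm (P ((T ^^ N) f)))"
      using sm_sum_norm by simp
    also have "\<dots> \<le> (\<Sum>f\<in>F. (D * norm e) * (D' * norm ((T ^^ N) f)))"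
      using u(2) P_norm by (intro sum_mono mult_mono) (auto simp: D0)
    also have "\<dots> = D * D' * norm e * (\<Sum>f\<in>F. norm ((T ^^ N) f))"
      by (simp add: sum_distrib_left mult_ac)
    also have "\<dots> \<le> D * D' * norm e * \<delta>" using sumTN D0 D'0 by (intro mult_left_mono) auto
    also have "\<dots> \<le> 1/2 * norm e"
    proof -
      have dd: "0 \<le> D * D'" using D0 D'0 by simp
      have "D * D' * \<delta> = (D * D') / (2 * (D * D' + 1))" unfolding \<delta>_def by simp
      also have "\<dots> \<le> 1/2" using dd by (simp add: divide_le_eq)
      finally have dd2: "D * D' * \<delta> \<le> 1/2" .
      show ?thesis using mult_right_mono[OF dd2 norm_ge_zero[of e]] by (simp add: mult_ac)
    qed
    finally show ?thesis .
  qed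
  obtain KT where KT: "KT > 0" "\<And>y. norm (T y) \<le> norm y * KT" using blTb by blast
  define \<theta> where "\<theta> = root N (1/2)"
  have th: "0 < \<theta>" "\<theta> < 1" "\<theta> ^ N = 1/2" unfolding \<theta>_def using N1 by (auto simp: real_root_gt_zero)
  have allbdd: "bdd x" for x
  proof -
    define e where "e n = P ((T ^^ n) x)" for n
    have e_span: "e n \<in> span F" for n unfolding e_def by (rule P_span)
    have e_shift: "norm (e (n + N)) \<le> 1/2 * norm (e n)" for n
    proof -
      have "e (n + N) = P ((T ^^ N) ((T ^^ n) x))" unfolding e_def by (simp add: funpow_add add.commute)
      also have "\<dots> = P ((T ^^ N) (e n))" unfolding e_def by (rule P_shift)
      finally show ?thesis using contr[OF e_span] by simp
    qed
    define G where "G = (\<Sum>r<N. norm (e r))"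
    have G0: "G \<ge> 0" unfolding G_def by (simp add: sum_nonneg)
    have e_bound: "norm (e n) \<le> 2 * G * \<theta> ^ n" for n
    proof (induction n rule: less_induct)
      case (less n)
      show ?case
      proof (cases "n < N")
        case True
        have 1: "norm (e n) \<le> G" unfolding G_def using True by (intro member_le_sum) auto
        have 2: "\<theta> ^ N \<le> \<theta> ^ n" using True th by (intro power_decreasing) auto
        have "G = 2 * G * \<theta> ^ N" using th(3) by simp
        also have "\<dots> \<le> 2 * G * \<theta> ^ n" using 2 G0 by (intro mult_left_mono) auto
        finally show ?thesis using 1 by linarith
      next
        case False
        then obtain n' where n': "n = n' + N" by (metis add.commute le_add_diff_inverse not_less)
        have "n' < n" using n' N1 by simp
        have "norm (e n) \<le> 1/2 * norm (e n')" unfolding n' by (rule e_shift)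
        also have "\<dots> \<le> 1/2 * (2 * G * \<theta> ^ n')" using less.IH[OF \<open>n' < n\<close>] by simp
        also have "\<dots> = 2 * G * \<theta> ^ n" unfolding n' power_add th(3) by simp
        finally show ?thesis .
      qed
    qed
    have sum_e: "(\<Sum>j<n. norm (e j)) \<le> 2 * G / (1 - \<theta>)" for n
    proof -
      have "(\<Sum>j<n. norm (e j)) \<le> (\<Sum>j<n. 2 * G * \<theta> ^ j)" by (intro sum_mono e_bound)
      also have "\<dots> = 2 * G * ((1 - \<theta> ^ n) / (1 - \<theta>))"
        by (simp add: sum_distrib_left[symmetric] sum_gp_strict th(2) less_imp_neq)
      also have "\<dots> \<le> 2 * G * (1 / (1 - \<theta>))"
        using th G0 by (intro mult_left_mono divide_right_mono) auto
      finally show ?thesis by simp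
    qed
    define w where "w n = (T ^^ n) x - e n" for n
    have w_bdd: "bdd (w n)" for n unfolding w_def e_def by (rule P_bdd)
    have w_orb: "\<forall>k. norm ((T ^^ k) (w n)) \<le> D * norm x + D * KT * (\<Sum>j<n. norm (e j))" for n
    proof (induction n)
      case 0
      show ?case unfolding w_def e_def using P_orb by simp
    next
      case (Suc n)
      define h where "h = T (e n) - P (T (e n))"
      have eS: "e (Suc n) = P (T (e n))"
      proof -
        have "(T ^^ Suc n) x = T (w n) + T (e n)" unfolding w_def
          by (simp add: linear_simps(1)[OF blT, symmetric])
        then have "e (Suc n) = P (T (w n)) + P (T (e n))" unfolding e_def by (simp add: P_add)
        moreover have "P (T (w n)) = 0" by (intro P_bdd0 bdd_T w_bdd)
        ultimately show ?thesis by simp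
      qed
      have wS: "w (Suc n) = T (w n) + h"
      proof -
        have "(T ^^ Suc n) x = T (w n) + T (e n)" unfolding w_def
          by (simp add: linear_simps(1)[OF blT, symmetric])
        then show ?thesis unfolding h_def w_def[of "Suc n"] eS by simp
      qed
      show ?case
      proof
        fix k
        have "norm ((T ^^ k) (w (Suc n))) \<le> norm ((T ^^ Suc k) (w n)) + norm ((T ^^ k) h)"
          unfolding wS pow_add by (simp add: funpow_swap1 norm_triangle_ineq)
        also have "\<dots> \<le> (D * norm x + D * KT * (\<Sum>j<n. norm (e j))) + D * (norm (e n) * KT)"
        proof (rule add_mono)
          show "norm ((T ^^ Suc k) (w n)) \<le> D * norm x + D * KT * (\<Sum>j<n. norm (e j))" using Suc by blast
          have "norm ((T ^^ k) h) \<le> D * norm (T (e n))" unfolding h_def by (rule P_orb)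
          also have "\<dots> \<le> D * (norm (e n) * KT)" using KT(2) D0 by (intro mult_left_mono) auto
          finally show "norm ((T ^^ k) h) \<le> D * (norm (e n) * KT)" .
        qed
        also have "\<dots> = D * norm x + D * KT * (\<Sum>j<Suc n. norm (e j))" by (simp add: algebra_simps)
        finally show "norm ((T ^^ k) (w (Suc n))) \<le> D * norm x + D * KT * (\<Sum>j<Suc n. norm (e j))" .
      qed
    qed
    have "norm ((T ^^ n) x) \<le> D * norm x + D * KT * (2 * G / (1 - \<theta>)) + 2 * G" for n
    proof -
      have "(T ^^ n) x = w n + e n" unfolding w_def by simp
      then have "norm ((T ^^ n) x) \<le> norm (w n) + norm (e n)" by (simp add: norm_triangle_ineq)
      also have "norm (w n) \<le> D * norm x + D * KT * (\<Sum>j<n. norm (e j))" using w_orb[of n, rule_format, of 0] by simp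
      also have "\<dots> \<le> D * norm x + D * KT * (2 * G / (1 - \<theta>))"
        using sum_e[of n] D0 KT(1) by (intro add_left_mono mult_left_mono) auto
      also have "norm (e n) \<le> 2 * G * 1"
      proof -
        have "\<theta> ^ n \<le> 1" using th by (intro power_le_one) auto
        then have "2 * G * \<theta> ^ n \<le> 2 * G * 1" using G0 by (intro mult_left_mono) auto
        then show ?thesis using e_bound[of n] by linarith
      qed
      finally show ?thesis by simp
    qed
    then show "bdd x" unfolding bdd_def by blast
  qed
  then show False using unbvec unfolding not_bdd[symmetric] by blast
qed

end


context LYsetup begin

lemma allA_case1:
  assumes c1: "\<exists>C. \<forall>m x. norm ((T ^^ p m) x) \<le> C * norm x"
  shows "x \<in> Aset"
proof -
  obtain C where C: "\<forall>m x. norm ((T ^^ p m) x) \<le> C * norm x" using c1 by blast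
  have C0: "C \<ge> 0"
  proof -
    obtain u where u: "\<forall>B. \<exists>n. norm ((T ^^ n) u) > B" using unbvec by blast
    then have "u \<noteq> 0" by (metis norm_zero pow_zero less_irrefl)
    show ?thesis
    proof (rule ccontr)
      assume "\<not> C \<ge> 0"
      then have "C * norm u < 0" using \<open>u \<noteq> 0\<close> by (simp add: mult_neg_pos)
      moreover have "norm ((T ^^ p 0) u) \<le> C * norm u" using C by blast
      ultimately show False by (metis norm_ge_zero not_le order_trans)
    qed
  qed
  show ?thesis unfolding Aset_def mem_Collect_eq
  proof (rule LIMSEQ_I)
    fix e :: real assume e: "e > 0"
    obtain a where a: "a \<in> Aset" "dist a x < e / (2 * (C + 1))"
      using A_dense[of "e / (2 * (C + 1))" x] e C0 by auto
    obtain m0 where m0: "\<forall>m\<ge>m0. \<forall>y\<in>{a}. norm ((T ^^ p m) y) \<le> e / 2"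
      using ev_small[of "{a}" "e/2"] a(1) e by auto
    show "\<exists>no. \<forall>n\<ge>no. norm ((T ^^ p n) x - 0) < e"
    proof (intro exI[of _ m0] allI impI)
      fix n assume "n \<ge> m0"
      have "(T ^^ p n) x = (T ^^ p n) a + (T ^^ p n) (x - a)" by (simp add: pow_add[symmetric])
      then have "norm ((T ^^ p n) x) \<le> norm ((T ^^ p n) a) + norm ((T ^^ p n) (x - a))"
        by (simp add: norm_triangle_ineq)
      also have "\<dots> \<le> e / 2 + C * norm (x - a)" using m0 \<open>n \<ge> m0\<close> C by (intro add_mono) auto
      also have "C * norm (x - a) \<le> C * (e / (2 * (C + 1)))"
        using a(2) C0 by (intro mult_left_mono) (auto simp: dist_norm norm_minus_commute)
      also have "C * (e / (2 * (C + 1))) < e / 2" using C0 e by (simp add: field_simps)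
      finally show "norm ((T ^^ p n) x - 0) < e" by simp
    qed
  qed
qed

lemma step1:
  assumes allA: "\<forall>x. x \<in> Aset" and fin: "finite F"
    and indep: "\<forall>e\<in>span F. bdd e \<longrightarrow> e = 0" and r: "r > 0"
  shows "\<exists>y. norm (y - t) < r \<and> (\<forall>e\<in>span F. \<not> bdd (y + e))"
proof -
  obtain v0 where v0: "\<forall>e\<in>span F. \<not> bdd (v0 + e)" using baire_core[OF fin indep allA] by blast
  define s1 where "s1 = r / (norm v0 + 1)"
  define s2 where "s2 = s1 / 2"
  have s1pos: "s1 > 0" unfolding s1_def using r by (simp add: add_nonneg_pos)
  have close: "norm ((t + s *\<^sub>R v0) - t) < r" if "0 < s" "s \<le> s1" for s
  proof -
    have "norm ((t + s *\<^sub>R v0) - t) = s * norm v0" using that by simp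
    also have "\<dots> \<le> s1 * norm v0" using that by (intro mult_right_mono) auto
    also have "\<dots> < r"
    proof -
      have "r * norm v0 < r * (norm v0 + 1)" using r by simp
      then show ?thesis unfolding s1_def by (simp add: divide_less_eq add_nonneg_pos mult.commute)
    qed
    finally show ?thesis .
  qed
  have sc: "(c::real) *\<^sub>R e \<in> span F" if "e \<in> span F" for c e
    using span_scale[OF that, of "of_real c"] by (simp add: ofr)
  show ?thesis
  proof (rule ccontr)
    assume "\<not> ?thesis"
    then have bad: "\<exists>e\<in>span F. bdd (t + s *\<^sub>R v0 + e)" if "0 < s" "s \<le> s1" for s
      using close[OF that] by blast
    obtain e1 where e1: "e1 \<in> span F" "bdd (t + s1 *\<^sub>R v0 + e1)" using bad[of s1] s1pos by auto
    obtain e2 where e2: "e2 \<in> span F" "bdd (t + s2 *\<^sub>R v0 + e2)" using bad[of s2] s1pos unfolding s2_def by auto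
    have "bdd ((t + s1 *\<^sub>R v0 + e1) - (t + s2 *\<^sub>R v0 + e2))" by (rule bdd_diff[OF e1(2) e2(2)])
    moreover have "(t + s1 *\<^sub>R v0 + e1) - (t + s2 *\<^sub>R v0 + e2) = (s1 - s2) *\<^sub>R v0 + (e1 - e2)"
      by (simp add: algebra_simps)
    ultimately have "bdd ((1 / (s1 - s2)) *\<^sub>R ((s1 - s2) *\<^sub>R v0 + (e1 - e2)))" by (metis bdd_scaleR)
    moreover have "(1 / (s1 - s2)) *\<^sub>R ((s1 - s2) *\<^sub>R v0 + (e1 - e2)) = v0 + (1 / (s1 - s2)) *\<^sub>R (e1 - e2)"
      using s1pos unfolding s2_def by (simp add: scaleR_add_right)
    moreover have "(1 / (s1 - s2)) *\<^sub>R (e1 - e2) \<in> span F" using e1(1) e2(1) by (intro sc span_diff)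
    ultimately show False using v0 by metis
  qed
qed

lemma indep_insert:
  assumes indep: "\<forall>e\<in>span F. bdd e \<longrightarrow> e = 0" and y: "\<forall>e\<in>span F. \<not> bdd (y + e)"
  shows "\<forall>e\<in>span (insert y F). bdd e \<longrightarrow> e = 0"
proof (intro ballI impI)
  fix e assume e: "e \<in> span (insert y F)" "bdd e"
  then obtain k where k: "e - sm k y \<in> span F" unfolding span_breakdown_eq by blast
  show "e = 0"
  proof (cases "k = 0")
    case True
    then show ?thesis using k e(2) indep by auto
  next
    case False
    have "sm (inverse k) e = y + sm (inverse k) (e - sm k y)"
      using False by (simp add: scale_right_diff_distrib)
    moreover have "bdd (sm (inverse k) e)" using bdd_sm[OF e(2)] .
    moreover have "sm (inverse k) (e - sm k y) \<in> span F" using k by (rule span_scale)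
    ultimately show ?thesis using y by metis
  qed
qed

end


context LYsetup begin

primrec ys1 :: "(nat \<Rightarrow> 'a) \<Rightarrow> (nat \<Rightarrow> real) \<Rightarrow> nat \<Rightarrow> 'a list" where
  "ys1 t r 0 = []"
| "ys1 t r (Suc n) = ys1 t r n @ [SOME y. norm (y - t n) < r n \<and> (\<forall>e\<in>span (set (ys1 t r n)). \<not> bdd (y + e))]"

lemma ys1_len[simp]: "length (ys1 t r n) = n" by (induction n) auto

lemma ys1_nth: "k < n \<Longrightarrow> ys1 t r n ! k = ys1 t r (Suc k) ! k"
proof (induction n)
  case 0 then show ?case by simp
next
  case (Suc n)
  show ?case
  proof (cases "k < n")
    case True then show ?thesis using Suc by (simp add: nth_append)
  next
    case False then have "k = n" using Suc by simp
    then show ?thesis by simp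
  qed
qed

lemma ys1_inv:
  assumes allA: "\<forall>x. x \<in> Aset" and rpos: "\<forall>k. r k > 0"
  shows "(\<forall>e\<in>span (set (ys1 t r n)). bdd e \<longrightarrow> e = 0) \<and> (\<forall>k<n. norm (ys1 t r n ! k - t k) < r k)"
proof (induction n)
  case 0 then show ?case by simp
next
  case (Suc n)
  let ?F = "set (ys1 t r n)"
  have ex: "\<exists>y. norm (y - t n) < r n \<and> (\<forall>e\<in>span ?F. \<not> bdd (y + e))"
    by (rule step1[OF allA]) (use Suc rpos in auto)
  define y where "y = (SOME y. norm (y - t n) < r n \<and> (\<forall>e\<in>span ?F. \<not> bdd (y + e)))"
  have y: "norm (y - t n) < r n" "\<forall>e\<in>span ?F. \<not> bdd (y + e)"
    using someI_ex[OF ex] unfolding y_def by auto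
  have eq: "ys1 t r (Suc n) = ys1 t r n @ [y]" unfolding y_def by simp
  have "\<forall>e\<in>span (insert y ?F). bdd e \<longrightarrow> e = 0"
    by (rule indep_insert) (use Suc y in auto)
  moreover have "set (ys1 t r (Suc n)) = insert y ?F" unfolding eq by auto
  moreover have "\<forall>k<Suc n. norm (ys1 t r (Suc n) ! k - t k) < r k"
  proof (intro allI impI)
    fix k assume "k < Suc n"
    show "norm (ys1 t r (Suc n) ! k - t k) < r k"
    proof (cases "k < n")
      case True then show ?thesis using Suc unfolding eq by (simp add: nth_append)
    next
      case False then have "k = n" using \<open>k < Suc n\<close> by simp
      then show ?thesis using y(1) unfolding eq by (simp add: nth_append)
    qed
  qed
  ultimately show ?case by simp
qed

theorem case1_main:
  fixes t :: "nat \<Rightarrow> 'a" and r :: "nat \<Rightarrow> real"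
  assumes c1: "\<exists>C. \<forall>m x. norm ((T ^^ p m) x) \<le> C * norm x"
    and rpos: "\<forall>k. r k > 0"
  shows "\<exists>y. (\<forall>k. norm (y k - t k) < r k) \<and> (\<forall>v\<in>span (range y). v \<noteq> 0 \<longrightarrow> irregular_vector T v)"
proof -
  have allA: "\<forall>x. x \<in> Aset" using allA_case1[OF c1] by blast
  define y where "y k = ys1 t r (Suc k) ! k" for k
  have yn: "ys1 t r n ! k = y k" if "k < n" for k n using ys1_nth[OF that] unfolding y_def by simp
  show ?thesis
  proof (intro exI[of _ y] conjI allI ballI impI)
    fix k show "norm (y k - t k) < r k" unfolding y_def using ys1_inv[OF allA rpos, of t "Suc k"] by simp
  next
    fix v assume v: "v \<in> span (range y)" and vnz: "v \<noteq> 0"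
    obtain K c where K: "finite K" "v = (\<Sum>k\<in>K. sm (c k) (y k))" using span_repr[OF v] by blast
    define n where "n = Suc (\<Sum>k\<in>K. k)"
    have "k < n" if "k \<in> K" for k
    proof -
      have "k \<le> (\<Sum>k\<in>K. k)" using K(1) that by (intro member_le_sum) auto
      then show ?thesis unfolding n_def by simp
    qed
    then have "y k \<in> set (ys1 t r n)" if "k \<in> K" for k
      using yn[of k n] that by (metis in_set_conv_nth ys1_len)
    then have "v \<in> span (set (ys1 t r n))" unfolding K(2) by (intro span_sum span_scale span_base)
    then have ub: "\<not> bdd v" using ys1_inv[OF allA rpos, of t n] vnz by blast
    have "(\<lambda>m. (T ^^ p m) v) \<longlonglongrightarrow> 0" using allA unfolding Aset_def by blast
    then have small: "\<forall>e>0. \<exists>n. norm ((T ^^ n) v) < e"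
    proof (intro allI impI)
      fix e :: real assume "e > 0" "(\<lambda>m. (T ^^ p m) v) \<longlonglongrightarrow> 0"
      then obtain no where "\<forall>m\<ge>no. norm ((T ^^ p m) v - 0) < e" using LIMSEQ_D by blast
      then show "\<exists>n. norm ((T ^^ n) v) < e" by auto
    qed
    show "irregular_vector T v" by (rule irregularI[OF small ub])
  qed
qed

end


context LYsetup begin

theorem LY_main: "\<exists>Y. closure Y = UNIV \<and> subspace Y \<and> (\<forall>y\<in>Y. y \<noteq> 0 \<longrightarrow> irregular_vector T y)"
proof -
  obtain D :: "'a set" where D: "countable D" "closure D = UNIV" using sep by blast
  have Dne: "D \<noteq> {}" using D(2) by auto
  define DD where "DD = D \<times> (UNIV :: nat set)"
  have DDc: "countable DD" unfolding DD_def using D(1) by simp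
  have DDne: "DD \<noteq> {}" unfolding DD_def using Dne by simp
  define g where "g = from_nat_into DD"
  define t where "t k = fst (g k)" for k
  define r where "r k = 1 / (real (snd (g k)) + 1)" for k
  have rpos: "\<forall>k. 0 < r k \<and> r k \<le> 1" unfolding r_def by (simp add: divide_le_eq)
  have "\<exists>y. (\<forall>k. norm (y k - t k) < r k) \<and> (\<forall>v\<in>span (range y). v \<noteq> 0 \<longrightarrow> irregular_vector T v)"
  proof (cases "\<exists>C. \<forall>m x. norm ((T ^^ p m) x) \<le> C * norm x")
    case True
    have "\<forall>k. r k > 0" using rpos by simp
    then show ?thesis by (rule case1_main[OF True])
  next
    case False
    then have c2: "\<forall>C. \<exists>m x. norm ((T ^^ p m) x) > C * norm x" by (meson not_le)
    show ?thesis by (rule case2_main[OF c2 rpos])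
  qed
  then obtain y where y: "\<forall>k. norm (y k - t k) < r k"
      "\<forall>v\<in>span (range y). v \<noteq> 0 \<longrightarrow> irregular_vector T v" by blast
  have "closure (span (range y)) = UNIV"
  proof -
    have "x \<in> closure (span (range y))" for x
    proof (unfold closure_approachable, intro allI impI)
      fix e :: real assume e: "e > 0"
      obtain d where d: "d \<in> D" "dist d x < e / 2"
        using D(2) e by (metis UNIV_I closure_approachable half_gt_zero)
      obtain j :: nat where j: "1 / (real j + 1) < e / 2"
      proof -
        obtain j :: nat where "real j > 2 / e" using reals_Archimedean2 by blast
        then have "1 / (real j + 1) < e / 2" using e by (simp add: field_simps)
        then show ?thesis using that by blast
      qed
      obtain k where k: "g k = (d, j)"
        using from_nat_into_surj[OF DDc, of "(d, j)"] d(1) unfolding g_def DD_def by auto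
      have "dist (y k) x \<le> dist (y k) (t k) + dist (t k) x" by (rule dist_triangle)
      also have "dist (y k) (t k) < r k" using y(1) by (simp add: dist_norm)
      also have "r k = 1 / (real j + 1)" unfolding r_def k by simp
      also have "t k = d" unfolding t_def k by simp
      finally have "dist (y k) x < e" using j d(2) by linarith
      moreover have "y k \<in> span (range y)" by (intro span_base) auto
      ultimately show "\<exists>z\<in>span (range y). dist z x < e" by blast
    qed
    then show ?thesis by auto
  qed
  then show ?thesis using y(2) by (intro exI[of _ "span (range y)"]) auto
qed

end

lemma pow_lin_diff:
  fixes T :: "'a::real_normed_vector \<Rightarrow> 'a"
  assumes "bounded_linear T"
  shows "(T ^^ n) (x - y) = (T ^^ n) x - (T ^^ n) y"
proof (induction n)
  case 0 show ?case by simp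
next
  case (Suc n) then show ?case using linear_simps[OF assms] by simp
qed

lemma pow_lin_zero:
  fixes T :: "'a::real_normed_vector \<Rightarrow> 'a"
  assumes "bounded_linear T"
  shows "(T ^^ n) 0 = 0"
  using pow_lin_diff[OF assms, of n 0 0] by simp

lemma generic_main:
  fixes T :: "'a::banach \<Rightarrow> 'a" and sm :: "'k::{real_normed_field,heine_borel} \<Rightarrow> 'a \<Rightarrow> 'a"
  assumes md: "module sm"
    and ofr: "\<And>r x. sm (of_real r) x = r *\<^sub>R x"
    and nrm: "\<And>c x. norm (sm c x) = norm c * norm x"
    and comm: "\<And>c x. T (sm c x) = sm c (T x)"
    and bl: "bounded_linear T"
    and sepa: "separable_space (euclidean :: 'a topology)"
    and ch: "densely_unif_LY_chaotic T"
  shows "\<exists>Y. closure Y = UNIV \<and> module.subspace sm Y \<and> (\<forall>y\<in>Y. y \<noteq> 0 \<longrightarrow> irregular_vector T y)"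
proof -
  obtain S where S: "closure S = UNIV" "unif_LY_scrambled T S"
    using ch unfolding densely_unif_LY_chaotic_def by blast
  obtain x0 x1 where x01: "x0 \<in> S" "x1 \<in> S" "x0 \<noteq> x1"
    using S(2) unfolding unif_LY_scrambled_def by blast
  obtain p q :: "nat \<Rightarrow> nat" where pq: "\<forall>x\<in>S. \<forall>y\<in>S. x \<noteq> y \<longrightarrow>
          ((\<lambda>n. norm ((T ^^ p n) x - (T ^^ p n) y)) \<longlonglongrightarrow> 0) \<and>
          filterlim (\<lambda>n. norm ((T ^^ q n) x - (T ^^ q n) y)) at_top sequentially"
    using S(2) unfolding unif_LY_scrambled_def by blast
  have inA: "(\<lambda>m. (T ^^ p m) (s - x0)) \<longlonglongrightarrow> 0" if "s \<in> S" for s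
  proof (cases "s = x0")
    case True then show ?thesis by (simp add: pow_lin_zero[OF bl])
  next
    case False
    then have "(\<lambda>n. norm ((T ^^ p n) s - (T ^^ p n) x0)) \<longlonglongrightarrow> 0" using pq that x01(1) by blast
    then show ?thesis by (simp add: pow_lin_diff[OF bl] tendsto_norm_zero_iff)
  qed
  have Adense: "closure {x. (\<lambda>m. (T ^^ p m) x) \<longlonglongrightarrow> 0} = UNIV"
  proof -
    have "z \<in> closure {x. (\<lambda>m. (T ^^ p m) x) \<longlonglongrightarrow> 0}" for z
    proof (unfold closure_approachable, intro allI impI)
      fix e :: real assume "e > 0"
      then obtain s where s: "s \<in> S" "dist s (z + x0) < e" using S(1) by (metis UNIV_I closure_approachable)
      have "dist (s - x0) z = dist s (z + x0)" by (simp add: dist_norm algebra_simps)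
      then show "\<exists>y\<in>{x. (\<lambda>m. (T ^^ p m) x) \<longlonglongrightarrow> 0}. dist y z < e"
        using s inA[OF s(1)] by (intro bexI[of _ "s - x0"]) auto
    qed
    then show ?thesis by auto
  qed
  have unbvec: "\<exists>u. \<forall>B. \<exists>n. norm ((T ^^ n) u) > B"
  proof (intro exI[of _ "x1 - x0"] allI)
    fix B :: real
    have x10: "x1 \<noteq> x0" using x01(3) by simp
    have fl: "filterlim (\<lambda>n. norm ((T ^^ q n) x1 - (T ^^ q n) x0)) at_top sequentially"
      using pq[rule_format, OF x01(2) x01(1) x10] by (rule conjunct2)
    have "eventually (\<lambda>n. norm ((T ^^ q n) x1 - (T ^^ q n) x0) > B) sequentially"
      using fl unfolding filterlim_at_top_dense by (rule allE)
    then obtain N where "\<forall>n\<ge>N. norm ((T ^^ q n) x1 - (T ^^ q n) x0) > B"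
      unfolding eventually_sequentially by blast
    then have "norm ((T ^^ q N) x1 - (T ^^ q N) x0) > B" by blast
    then show "\<exists>n. norm ((T ^^ n) (x1 - x0)) > B" by (intro exI[of _ "q N"]) (simp add: pow_lin_diff[OF bl])
  qed
  have sep: "\<exists>D::'a set. countable D \<and> closure D = UNIV"
    using sepa unfolding separable_space_def by (auto simp: euclidean_closure_of)
  have L: "LYsetup sm T p"
    by (intro LYsetup.intro LYsetup_axioms.intro md bl ofr nrm comm Adense unbvec sep)
  show ?thesis using LYsetup.LY_main[OF L] .
qed


theorem corollary3p6:
  fixes T :: "'a::banach \<Rightarrow> 'a"
    and S :: "'b::banach \<Rightarrow> 'b" and sc :: "complex \<Rightarrow> 'b \<Rightarrow> 'b"
  shows "(separable_space (euclidean :: 'a topology) \<and> bounded_linear T \<and>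
            densely_unif_LY_chaotic T
          \<longrightarrow> (\<exists>Y. closure Y = UNIV \<and> irregular_manifold T Y))
       \<and> (complex_normed_structure sc \<and> separable_space (euclidean :: 'b topology) \<and>
            bounded_linear S \<and> (\<forall>c x. S (sc c x) = sc c (S x)) \<and>
            densely_unif_LY_chaotic S
          \<longrightarrow> (\<exists>Y. closure Y = UNIV \<and> irregular_manifold_C sc S Y))"
proof (intro conjI impI)
  assume H: "separable_space (euclidean :: 'a topology) \<and> bounded_linear T \<and> densely_unif_LY_chaotic T"
  have md: "module (scaleR :: real \<Rightarrow> 'a \<Rightarrow> 'a)" by (rule real_vector.module_axioms)
  have comm: "T (c *\<^sub>R x) = c *\<^sub>R T x" for c x using H by (simp add: linear_simps)
  obtain Y where Y: "closure Y = UNIV" "module.subspace (scaleR :: real \<Rightarrow> 'a \<Rightarrow> 'a) Y"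
      "\<forall>y\<in>Y. y \<noteq> 0 \<longrightarrow> irregular_vector T y"
    using generic_main[of "scaleR :: real \<Rightarrow> 'a \<Rightarrow> 'a" T, OF md _ _ comm] H by auto
  show "\<exists>Y. closure Y = UNIV \<and> irregular_manifold T Y"
    using Y unfolding irregular_manifold_def subspace_raw_def by blast
next
  assume H: "complex_normed_structure sc \<and> separable_space (euclidean :: 'b topology) \<and>
            bounded_linear S \<and> (\<forall>c x. S (sc c x) = sc c (S x)) \<and> densely_unif_LY_chaotic S"
  then have md: "module sc" and ofr: "\<And>r x. sc (of_real r) x = r *\<^sub>R x"
    and nrm: "\<And>c x. norm (sc c x) = norm c * norm x"
    unfolding complex_normed_structure_def by auto
  obtain Y where Y: "closure Y = UNIV" "module.subspace sc Y"
      "\<forall>y\<in>Y. y \<noteq> 0 \<longrightarrow> irregular_vector S y"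
    using generic_main[of sc S, OF md ofr nrm] H by auto
  show "\<exists>Y. closure Y = UNIV \<and> irregular_manifold_C sc S Y"
    using Y unfolding irregular_manifold_C_def by blast
qed


end
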